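(* In the square, the only $\lambda$-stable periodic cylinders are the two ping-pong cylinders and the two Fagnano cylinders of period four (those of slope $\pm1$).
   Context: For a polygon $P$ with sides labeled anticlockwise $1,\dots,d$, let $\Phi$ be its billiard map (collision to collision, specular reflection), in coordinates $(s,\theta)$ with $s$ arc length on $\partial P$ and $\theta\in(-\pi/2,\pi/2)$ the angle from the inward normal. For $\lambda>0$ let $R_\lambda(s,\theta)=(s,\lambda\theta)$ and $\Phi_\lambda:=R_\lambda\circ\Phi$. A periodic cylinder is a maximal one-parameter family of parallel periodic orbits of $\Phi$ with the same itinerary (sequence of sides hit). A ping-pong cylinder consists of orbits bouncing perpendicularly between two parallel sides. A Fagnano orbit is a periodic orbit whose itinerary satisfies $i_{k+1}=i_k+m\pmod d$ for a fixed $1\le m<d$; its cylinder is a Fagnano cylinder. A periodic orbit $q$ of $\Phi$ is $\lambda^{+}$-stable (resp. $\lambda^-$-stable) if there exist a strictly decreasing (resp. strictly increasing) sequence $\lambda_n\to1$ and periodic orbits $q_n$ of $\Phi_{\lambda_n}$ with the same itinerary as $q$ such that $q_n\to q$. A periodic cylinder is $\lambda$-stable if it contains a $\lambda^+$-stable periodic orbit and a $\lambda^-$-stable periodic orbit. *)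

theory Defs
  imports "HOL-Analysis.Analysis"
begin

text \<open>Billiards in the unit square [0,1]^2.  The boundary is parametrised by arc length
  s in [0,4), starting at the vertex (0,0) and running anticlockwise; side k (k = 1..4)
  is the open arc s in (k-1,k).  Phase points are pairs (s, theta).\<close>

type_synonym phase = "real \<times> real"

definition side :: "real \<Rightarrow> nat" where
  "side s = nat \<lfloor>s\<rfloor> + 1"

definition bpt :: "real \<Rightarrow> real \<times> real" where
  "bpt s = (if s < 1 then (s, 0) else if s < 2 then (1, s - 1)
            else if s < 3 then (3 - s, 1) else (0, 4 - s))"

definition nrm :: "nat \<Rightarrow> real \<times> real" where
  "nrm k = (if k = 1 then (0, 1) else if k = 2 then (-1, 0) else if k = 3 then (0, -1) else (1, 0))"

definition tng :: "nat \<Rightarrow> real \<times> real" where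
  "tng k = (if k = 1 then (1, 0) else if k = 2 then (0, 1) else if k = 3 then (-1, 0) else (0, -1))"

definition dir :: "real \<Rightarrow> real \<Rightarrow> real \<times> real" where
  "dir s \<theta> = cos \<theta> *\<^sub>R nrm (side s) + sin \<theta> *\<^sub>R tng (side s)"

definition open_square :: "(real \<times> real) set" where
  "open_square = {(x, y). 0 < x \<and> x < 1 \<and> 0 < y \<and> y < 1}"

definition in_phase :: "phase \<Rightarrow> bool" where
  "in_phase x \<longleftrightarrow> 0 \<le> fst x \<and> fst x < 4 \<and> fst x \<notin> \<int> \<and> - (pi/2) < snd x \<and> snd x < pi/2"

text \<open>The billiard map Phi, as its graph: y = Phi x.  (It is undefined when the
  trajectory hits a vertex.)  Specular reflection preserves the tangential component of
  the velocity, so the outgoing angle theta' satisfies sin theta' = v . tangent.\<close>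
definition billiard_step :: "phase \<Rightarrow> phase \<Rightarrow> bool" where
  "billiard_step x y \<longleftrightarrow> in_phase x \<and> in_phase y \<and>
     (\<exists>t>0. bpt (fst y) = bpt (fst x) + t *\<^sub>R dir (fst x) (snd x)
        \<and> (\<forall>\<tau>. 0 < \<tau> \<and> \<tau> < t \<longrightarrow> bpt (fst x) + \<tau> *\<^sub>R dir (fst x) (snd x) \<in> open_square)
        \<and> sin (snd y) = dir (fst x) (snd x) \<bullet> tng (side (fst y)))"

text \<open>Phi_lambda = R_lambda o Phi, as its graph.\<close>
definition lambda_step :: "real \<Rightarrow> phase \<Rightarrow> phase \<Rightarrow> bool" where
  "lambda_step lam x y \<longleftrightarrow> (\<exists>\<theta>. billiard_step x (fst y, \<theta>) \<and> snd y = lam * \<theta>)"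

definition periodic_orbit :: "(phase \<Rightarrow> phase \<Rightarrow> bool) \<Rightarrow> phase list \<Rightarrow> bool" where
  "periodic_orbit F q \<longleftrightarrow> q \<noteq> [] \<and>
     (\<forall>i < length q. F (q ! i) (q ! (Suc i mod length q)))"

text \<open>The list has minimal length (the orbit is not traversed several times).\<close>
definition primitive :: "phase list \<Rightarrow> bool" where
  "primitive q \<longleftrightarrow> (\<forall>p. 0 < p \<and> p < length q \<longrightarrow>
      (\<exists>i < length q. q ! ((i + p) mod length q) \<noteq> q ! i))"

definition itinerary :: "phase list \<Rightarrow> nat list" where
  "itinerary q = map (\<lambda>x. side (fst x)) q"

text \<open>Cylinder of a periodic orbit q: all periodic orbits of Phi with the same itinerary
  and parallel to q (same angles at corresponding bounces).\<close>
definition cylinder_of :: "phase list \<Rightarrow> phase list set" where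
  "cylinder_of q = {q'. periodic_orbit billiard_step q' \<and> itinerary q' = itinerary q
                        \<and> map snd q' = map snd q}"

definition periodic_cylinder :: "phase list set \<Rightarrow> bool" where
  "periodic_cylinder C \<longleftrightarrow>
     (\<exists>q. periodic_orbit billiard_step q \<and> primitive q \<and> C = cylinder_of q)"

definition lambda_plus_stable :: "phase list \<Rightarrow> bool" where
  "lambda_plus_stable q \<longleftrightarrow>
     (\<exists>lam :: nat \<Rightarrow> real. \<exists>qs :: nat \<Rightarrow> phase list.
        (\<forall>n. lam (Suc n) < lam n) \<and> lam \<longlonglongrightarrow> 1 \<and> (\<forall>n. 0 < lam n) \<and>
        (\<forall>n. periodic_orbit (lambda_step (lam n)) (qs n) \<and> itinerary (qs n) = itinerary q) \<and>
        (\<forall>i < length q. (\<lambda>n. qs n ! i) \<longlonglongrightarrow> q ! i))"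

definition lambda_minus_stable :: "phase list \<Rightarrow> bool" where
  "lambda_minus_stable q \<longleftrightarrow>
     (\<exists>lam :: nat \<Rightarrow> real. \<exists>qs :: nat \<Rightarrow> phase list.
        (\<forall>n. lam n < lam (Suc n)) \<and> lam \<longlonglongrightarrow> 1 \<and> (\<forall>n. 0 < lam n) \<and>
        (\<forall>n. periodic_orbit (lambda_step (lam n)) (qs n) \<and> itinerary (qs n) = itinerary q) \<and>
        (\<forall>i < length q. (\<lambda>n. qs n ! i) \<longlonglongrightarrow> q ! i))"

definition lambda_stable_cylinder :: "phase list set \<Rightarrow> bool" where
  "lambda_stable_cylinder C \<longleftrightarrow>
     (\<exists>q\<in>C. lambda_plus_stable q) \<and> (\<exists>q\<in>C. lambda_minus_stable q)"

definition ping_pong_cylinder :: "phase list set \<Rightarrow> bool" where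
  "ping_pong_cylinder C \<longleftrightarrow> C \<noteq> {} \<and> (\<forall>q\<in>C. length q = 2 \<and> snd (q!0) = 0 \<and> snd (q!1) = 0
      \<and> nrm (side (fst (q!1))) = - nrm (side (fst (q!0))))"

definition fagnano_orbit :: "phase list \<Rightarrow> bool" where
  "fagnano_orbit q \<longleftrightarrow> (\<exists>m::nat. 1 \<le> m \<and> m < 4 \<and>
      (\<forall>k < length q. itinerary q ! (Suc k mod length q) mod 4 = (itinerary q ! k + m) mod 4))"

text \<open>Fagnano cylinder of period four with slope +-1 (|theta| = pi/4 at each bounce,
  the sides being axis parallel).\<close>
definition fagnano4_cylinder :: "phase list set \<Rightarrow> bool" where
  "fagnano4_cylinder C \<longleftrightarrow> C \<noteq> {} \<and> (\<forall>q\<in>C. fagnano_orbit q \<and> length q = 4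
      \<and> (\<forall>i<4. \<bar>snd (q!i)\<bar> = pi/4))"

end

theory Submission
  imports Defs
begin

lemma side_cases:
  assumes "0 \<le> s" "s < 4" "s \<notin> \<int>"
  shows "(0 < s \<and> s < 1 \<and> side s = 1 \<and> bpt s = (s,0)) \<or>
         (1 < s \<and> s < 2 \<and> side s = 2 \<and> bpt s = (1, s-1)) \<or>
         (2 < s \<and> s < 3 \<and> side s = 3 \<and> bpt s = (3-s, 1)) \<or>
         (3 < s \<and> s < 4 \<and> side s = 4 \<and> bpt s = (0, 4-s))"
proof -
  have n: "s \<noteq> 0" "s \<noteq> 1" "s \<noteq> 2" "s \<noteq> 3" using assms(3) by auto
  show ?thesis
  proof (cases "s < 1")
    case True
    then have "\<lfloor>s\<rfloor> = 0" using assms by (simp add: floor_eq_iff)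
    then show ?thesis using True assms n by (simp add: side_def bpt_def)
  next
    case f1: False
    show ?thesis
    proof (cases "s < 2")
      case True
      then have "\<lfloor>s\<rfloor> = 1" using f1 by (simp add: floor_eq_iff)
      then show ?thesis using True f1 n by (simp add: side_def bpt_def)
    next
      case f2: False
      show ?thesis
      proof (cases "s < 3")
        case True
        then have "\<lfloor>s\<rfloor> = 2" using f2 by (simp add: floor_eq_iff)
        then show ?thesis using True f2 n by (simp add: side_def bpt_def)
      next
        case f3: False
        then have "\<lfloor>s\<rfloor> = 3" using assms by (simp add: floor_eq_iff)
        then show ?thesis using f3 f2 assms n by (simp add: side_def bpt_def)
      qed
    qed
  qed
qed

lemma in_phase_cases:
  assumes "in_phase x"
  shows "(0 < fst x \<and> fst x < 1 \<and> side (fst x) = 1 \<and> bpt (fst x) = (fst x,0)) \<or>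
         (1 < fst x \<and> fst x < 2 \<and> side (fst x) = 2 \<and> bpt (fst x) = (1, fst x-1)) \<or>
         (2 < fst x \<and> fst x < 3 \<and> side (fst x) = 3 \<and> bpt (fst x) = (3-fst x, 1)) \<or>
         (3 < fst x \<and> fst x < 4 \<and> side (fst x) = 4 \<and> bpt (fst x) = (0, 4-fst x))"
  using assms side_cases unfolding in_phase_def by blast

lemma dir1: "side s = 1 \<Longrightarrow> dir s th = (sin th, cos th)"
  and dir2: "side s = 2 \<Longrightarrow> dir s th = (- cos th, sin th)"
  and dir3: "side s = 3 \<Longrightarrow> dir s th = (- sin th, - cos th)"
  and dir4: "side s = 4 \<Longrightarrow> dir s th = (cos th, - sin th)"
  by (auto simp: dir_def nrm_def tng_def)

lemma tng_vals: "tng 1 = (1,0)" "tng 2 = (0,1)" "tng 3 = (-1,0)" "tng 4 = (0,-1)"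
  by (auto simp: tng_def)

lemma step_basic:
  assumes "billiard_step x y"
  obtains t where "t > 0" "bpt (fst y) = bpt (fst x) + t *\<^sub>R dir (fst x) (snd x)"
    "sin (snd y) = dir (fst x) (snd x) \<bullet> tng (side (fst y))"
    "side (fst y) = 1 \<Longrightarrow> snd (dir (fst x) (snd x)) < 0"
    "side (fst y) = 2 \<Longrightarrow> fst (dir (fst x) (snd x)) > 0"
    "side (fst y) = 3 \<Longrightarrow> snd (dir (fst x) (snd x)) > 0"
    "side (fst y) = 4 \<Longrightarrow> fst (dir (fst x) (snd x)) < 0"
    "in_phase x" "in_phase y"
proof -
  from assms obtain t where t: "t > 0" "bpt (fst y) = bpt (fst x) + t *\<^sub>R dir (fst x) (snd x)"
    "\<forall>\<tau>. 0 < \<tau> \<and> \<tau> < t \<longrightarrow> bpt (fst x) + \<tau> *\<^sub>R dir (fst x) (snd x) \<in> open_square"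
    "sin (snd y) = dir (fst x) (snd x) \<bullet> tng (side (fst y))" and ph: "in_phase x" "in_phase y"
    unfolding billiard_step_def by blast
  define P where "P = bpt (fst x)"
  define d where "d = dir (fst x) (snd x)"
  have half: "bpt (fst x) + (t/2) *\<^sub>R d \<in> open_square" using t(1,3) unfolding d_def by auto
  obtain p1 p2 where P: "P = (p1,p2)" by (cases P)
  obtain d1 d2 where D: "d = (d1,d2)" by (cases d)
  have h: "0 < p1 + (t/2)*d1" "p1 + (t/2)*d1 < 1" "0 < p2 + (t/2)*d2" "p2 + (t/2)*d2 < 1"
    using half unfolding open_square_def P_def[symmetric] P D by auto
  have Q: "bpt (fst y) = (p1 + t*d1, p2 + t*d2)" using t(2) unfolding P_def[symmetric] d_def[symmetric] P D by simp
  have "side (fst y) = 1 \<Longrightarrow> d2 < 0"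
  proof -
    assume "side (fst y) = 1"
    then have "p2 + t*d2 = 0" using in_phase_cases[OF ph(2)] Q by auto
    then have "t * d2 < 0" using h by (simp add: algebra_simps)
    then show "d2 < 0" using t(1) by (simp add: mult_less_0_iff)
  qed
  moreover have "side (fst y) = 3 \<Longrightarrow> d2 > 0"
  proof -
    assume "side (fst y) = 3"
    then have "p2 + t*d2 = 1" using in_phase_cases[OF ph(2)] Q by auto
    then have "t * d2 > 0" using h by (simp add: algebra_simps)
    then show "d2 > 0" using t(1) by (simp add: zero_less_mult_iff)
  qed
  moreover have "side (fst y) = 2 \<Longrightarrow> d1 > 0"
  proof -
    assume "side (fst y) = 2"
    then have "p1 + t*d1 = 1" using in_phase_cases[OF ph(2)] Q by auto
    then have "t * d1 > 0" using h by (simp add: algebra_simps)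
    then show "d1 > 0" using t(1) by (simp add: zero_less_mult_iff)
  qed
  moreover have "side (fst y) = 4 \<Longrightarrow> d1 < 0"
  proof -
    assume "side (fst y) = 4"
    then have "p1 + t*d1 = 0" using in_phase_cases[OF ph(2)] Q by auto
    then have "t * d1 < 0" using h by (simp add: algebra_simps)
    then show "d1 < 0" using t(1) by (simp add: mult_less_0_iff)
  qed
  ultimately show ?thesis using that t ph unfolding d_def[symmetric] D by auto
qed

definition hor :: "nat \<Rightarrow> bool" where "hor k \<longleftrightarrow> k = 1 \<or> k = 3"

definition psi :: "phase \<Rightarrow> real" where
  "psi x = (if hor (side (fst x)) then pi/2 - \<bar>snd x\<bar> else \<bar>snd x\<bar>)"

lemma abs_sin_half: "\<bar>th\<bar> < pi/2 \<Longrightarrow> \<bar>sin th\<bar> = sin \<bar>th\<bar>"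
proof (cases "th \<ge> 0")
  case True
  assume "\<bar>th\<bar> < pi/2"
  then have "sin th \<ge> 0" using True by (intro sin_ge_zero) auto
  then show ?thesis using True by simp
next
  case False
  assume "\<bar>th\<bar> < pi/2"
  then have "sin (-th) \<ge> 0" using False by (intro sin_ge_zero) auto
  then show ?thesis using False by simp
qed

lemma in_phase_th: "in_phase x \<Longrightarrow> \<bar>snd x\<bar> < pi/2"
  unfolding in_phase_def by auto

lemma psi_bounds: "in_phase x \<Longrightarrow> 0 \<le> psi x \<and> psi x \<le> pi/2"
  using in_phase_th[of x] by (auto simp: psi_def)

lemma cos_pos_th: "in_phase x \<Longrightarrow> cos (snd x) > 0"
  unfolding in_phase_def by (intro cos_gt_zero_pi) auto

lemma dir_abs:
  assumes "in_phase x"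
  shows "\<bar>fst (dir (fst x) (snd x))\<bar> = cos (psi x) \<and> \<bar>snd (dir (fst x) (snd x))\<bar> = sin (psi x)"
proof -
  have a: "\<bar>sin (snd x)\<bar> = sin \<bar>snd x\<bar>" using abs_sin_half in_phase_th assms by blast
  have c: "\<bar>cos (snd x)\<bar> = cos \<bar>snd x\<bar>" using cos_pos_th[OF assms] by simp
  have e1: "cos (pi/2 - \<bar>snd x\<bar>) = sin \<bar>snd x\<bar>" by (simp add: sin_cos_eq)
  have e2: "sin (pi/2 - \<bar>snd x\<bar>) = cos \<bar>snd x\<bar>" by (simp add: cos_sin_eq)
  show ?thesis using in_phase_cases[OF assms] a c e1 e2
    by (auto simp: psi_def hor_def dir1 dir2 dir3 dir4)
qed

lemma psi_step:
  assumes "billiard_step x y"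
  shows "psi y = psi x"
proof -
  obtain t where st: "sin (snd y) = dir (fst x) (snd x) \<bullet> tng (side (fst y))" "in_phase x" "in_phase y"
    using step_basic[OF assms] by metis
  obtain d1 d2 where D: "dir (fst x) (snd x) = (d1,d2)" by (cases "dir (fst x) (snd x)")
  have da: "\<bar>d1\<bar> = cos (psi x)" "\<bar>d2\<bar> = sin (psi x)" using dir_abs[OF st(2)] D by auto
  have sy: "\<bar>sin (snd y)\<bar> = sin \<bar>snd y\<bar>" using abs_sin_half in_phase_th st(3) by blast
  have bx: "0 \<le> psi x" "psi x \<le> pi/2" using psi_bounds[OF st(2)] by auto
  have by': "0 \<le> psi y" "psi y \<le> pi/2" using psi_bounds[OF st(3)] by auto
  have e1: "cos (pi/2 - \<bar>snd y\<bar>) = sin \<bar>snd y\<bar>" by (simp add: sin_cos_eq)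
  consider "side (fst y) = 1" | "side (fst y) = 2" | "side (fst y) = 3" | "side (fst y) = 4"
    using in_phase_cases[OF st(3)] by auto
  then show ?thesis
  proof cases
    case 1
    then have p: "psi y = pi/2 - \<bar>snd y\<bar>" by (auto simp: psi_def hor_def)
    have "tng (side (fst y)) = (1,0)" using 1 by (simp add: tng_def)
    then have "sin (snd y) = d1" using st(1) D by simp
    then have "cos (psi y) = cos (psi x)" using p da sy e1 by (metis abs_minus_cancel)
    then have "arccos (cos (psi y)) = arccos (cos (psi x))" by simp
    then show ?thesis using bx by' by (simp add: arccos_cos)
  next
    case 3
    then have p: "psi y = pi/2 - \<bar>snd y\<bar>" by (auto simp: psi_def hor_def)
    have "tng (side (fst y)) = (-1,0)" using 3 by (simp add: tng_def)
    then have "sin (snd y) = - d1" using st(1) D by simp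
    then have "cos (psi y) = cos (psi x)" using p da sy e1 by (metis abs_minus_cancel)
    then have "arccos (cos (psi y)) = arccos (cos (psi x))" by simp
    then show ?thesis using bx by' by (simp add: arccos_cos)
  next
    case 2
    then have p: "psi y = \<bar>snd y\<bar>" by (auto simp: psi_def hor_def)
    have "tng (side (fst y)) = (0,1)" using 2 by (simp add: tng_def)
    then have "sin (snd y) = d2" using st(1) D by simp
    then have "sin (psi y) = sin (psi x)" using p da sy by (metis abs_minus_cancel)
    then have "arcsin (sin (psi y)) = arcsin (sin (psi x))" by simp
    then show ?thesis using bx by' by (simp add: arcsin_sin)
  next
    case 4
    then have p: "psi y = \<bar>snd y\<bar>" by (auto simp: psi_def hor_def)
    have "tng (side (fst y)) = (0,-1)" using 4 by (simp add: tng_def)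
    then have "sin (snd y) = - d2" using st(1) D by simp
    then have "sin (psi y) = sin (psi x)" using p da sy by (metis abs_minus_cancel)
    then have "arcsin (sin (psi y)) = arcsin (sin (psi x))" by simp
    then show ?thesis using bx by' by (simp add: arcsin_sin)
  qed
qed

lemma psi_lstep:
  assumes "lam > 0" "lambda_step lam x y"
  shows "psi y = lam * psi x + (1 - lam) * (pi/2) * (if hor (side (fst y)) then 1 else 0)"
proof -
  obtain th where b: "billiard_step x (fst y, th)" and e: "snd y = lam * th"
    using assms(2) unfolding lambda_step_def by blast
  have p: "psi (fst y, th) = psi x" using psi_step[OF b] by simp
  have a: "\<bar>snd y\<bar> = lam * \<bar>th\<bar>" using e assms(1) by (simp add: abs_mult)
  show ?thesis
  proof (cases "hor (side (fst y))")
    case True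
    then have "\<bar>th\<bar> = pi/2 - psi x" using p by (simp add: psi_def[of "(fst y, th)"])
    moreover have "psi y = pi/2 - \<bar>snd y\<bar>" using True by (simp add: psi_def[of y])
    ultimately have "psi y = pi/2 - lam * (pi/2 - psi x)" using a by simp
    then show ?thesis using True by (simp add: field_simps)
  next
    case False
    then have "\<bar>th\<bar> = psi x" using p by (simp add: psi_def[of "(fst y, th)"])
    moreover have "psi y = \<bar>snd y\<bar>" using False by (simp add: psi_def[of y])
    ultimately show ?thesis using False a by (simp add: algebra_simps)
  qed
qed

definition D :: "phase \<Rightarrow> real \<times> real" where "D z = dir (fst z) (snd z)"
definition P :: "phase \<Rightarrow> real \<times> real" where "P z = bpt (fst z)"

definition Fx where "Fx z = (if fst (D z) \<ge> 0 then fst (P z) else 2 - fst (P z))"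
definition Gx where "Gx z = (if fst (D z) \<le> 0 then 1 - fst (P z) else 1 + fst (P z))"
definition Fy where "Fy z = (if snd (D z) \<ge> 0 then snd (P z) else 2 - snd (P z))"
definition Gy where "Gy z = (if snd (D z) \<le> 0 then 1 - snd (P z) else 1 + snd (P z))"
definition len where "len x y = norm (P y - P x)"

lemma norm_dir: "norm (dir s th) = 1"
proof -
  have "norm (dir s th) = sqrt ((sin th)\<^sup>2 + (cos th)\<^sup>2)"
    unfolding dir_def nrm_def tng_def by (auto simp: norm_Pair power2_eq_square algebra_simps)
  then show ?thesis by simp
qed

lemma count_step:
  assumes "billiard_step x y"
  shows "Fx y - Fx x + (if side (fst y) = 4 then 2 else 0) = len x y * cos (psi x)"
    "Gx y - Gx x + (if side (fst y) = 2 then 2 else 0) = len x y * cos (psi x)"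
    "Fy y - Fy x + (if side (fst y) = 1 then 2 else 0) = len x y * sin (psi x)"
    "Gy y - Gy x + (if side (fst y) = 3 then 2 else 0) = len x y * sin (psi x)"
proof -
  obtain t where st: "t > 0" "bpt (fst y) = bpt (fst x) + t *\<^sub>R dir (fst x) (snd x)"
    "sin (snd y) = dir (fst x) (snd x) \<bullet> tng (side (fst y))"
    "side (fst y) = 1 \<Longrightarrow> snd (dir (fst x) (snd x)) < 0"
    "side (fst y) = 2 \<Longrightarrow> fst (dir (fst x) (snd x)) > 0"
    "side (fst y) = 3 \<Longrightarrow> snd (dir (fst x) (snd x)) > 0"
    "side (fst y) = 4 \<Longrightarrow> fst (dir (fst x) (snd x)) < 0"
    "in_phase x" "in_phase y"
    using step_basic[OF assms] by metis
  obtain d1 d2 where Dx: "D x = (d1,d2)" by (cases "D x")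
  obtain p1 p2 where Px: "P x = (p1,p2)" by (cases "P x")
  obtain e1 e2 where Dy: "D y = (e1,e2)" by (cases "D y")
  obtain q1 q2 where Py: "P y = (q1,q2)" by (cases "P y")
  have q: "q1 = p1 + t * d1" "q2 = p2 + t * d2" using st(2) Dx Px Py unfolding D_def P_def by auto
  have l: "len x y = t"
  proof -
    have "P y - P x = t *\<^sub>R D x" using st(2) unfolding D_def P_def by simp
    then show ?thesis using st(1) norm_dir unfolding len_def D_def by simp
  qed
  have da: "\<bar>d1\<bar> = cos (psi x)" "\<bar>d2\<bar> = sin (psi x)" using dir_abs[OF st(8)] Dx unfolding D_def by auto
  have cy: "cos (snd y) > 0" using cos_pos_th[OF st(9)] .
  have hits: "side (fst y) = 1 \<Longrightarrow> d2 < 0" "side (fst y) = 2 \<Longrightarrow> d1 > 0"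
    "side (fst y) = 3 \<Longrightarrow> d2 > 0" "side (fst y) = 4 \<Longrightarrow> d1 < 0"
    using st(4-7) Dx unfolding D_def by auto
  have cases: "(side (fst y) = 1 \<and> q2 = 0 \<and> e1 = d1 \<and> e2 > 0) \<or>
               (side (fst y) = 2 \<and> q1 = 1 \<and> e2 = d2 \<and> e1 < 0) \<or>
               (side (fst y) = 3 \<and> q2 = 1 \<and> e1 = d1 \<and> e2 < 0) \<or>
               (side (fst y) = 4 \<and> q1 = 0 \<and> e2 = d2 \<and> e1 > 0)"
  proof -
    have sy: "sin (snd y) = d1 * fst (tng (side (fst y))) + d2 * snd (tng (side (fst y)))"
      using st(3) Dx unfolding D_def by (cases "tng (side (fst y))") auto
    consider "side (fst y) = 1 \<and> P y = (fst y, 0)" | "side (fst y) = 2 \<and> P y = (1, fst y - 1)"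
      | "side (fst y) = 3 \<and> P y = (3 - fst y, 1)" | "side (fst y) = 4 \<and> P y = (0, 4 - fst y)"
      using in_phase_cases[OF st(9)] unfolding P_def by auto
    then show ?thesis
    proof cases
      case 1
      then show ?thesis using sy cy Dy Py unfolding D_def by (auto simp: dir1 tng_def)
    next
      case 2
      then show ?thesis using sy cy Dy Py unfolding D_def by (auto simp: dir2 tng_def)
    next
      case 3
      then show ?thesis using sy cy Dy Py unfolding D_def by (auto simp: dir3 tng_def)
    next
      case 4
      then show ?thesis using sy cy Dy Py unfolding D_def by (auto simp: dir4 tng_def)
    qed
  qed
  have pb: "0 \<le> p1" "p1 \<le> 1" "0 \<le> p2" "p2 \<le> 1"
    using in_phase_cases[OF st(8)] Px unfolding P_def by auto
  show "Fx y - Fx x + (if side (fst y) = 4 then 2 else 0) = len x y * cos (psi x)"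
    unfolding Fx_def Dx Px Dy Py l da(1)[symmetric] using cases hits q st(1)
    by (auto simp: abs_if algebra_simps)
  show "Gx y - Gx x + (if side (fst y) = 2 then 2 else 0) = len x y * cos (psi x)"
    unfolding Gx_def Dx Px Dy Py l da(1)[symmetric] using cases hits q st(1)
    by (auto simp: abs_if algebra_simps)
  show "Fy y - Fy x + (if side (fst y) = 1 then 2 else 0) = len x y * sin (psi x)"
    unfolding Fy_def Dx Px Dy Py l da(2)[symmetric] using cases hits q st(1)
    by (auto simp: abs_if algebra_simps)
  show "Gy y - Gy x + (if side (fst y) = 3 then 2 else 0) = len x y * sin (psi x)"
    unfolding Gy_def Dx Px Dy Py l da(2)[symmetric] using cases hits q st(1)
    by (auto simp: abs_if algebra_simps)
qed

lemma orbit_step: "periodic_orbit F q \<Longrightarrow> i < length q \<Longrightarrow> F (q!i) (q!(Suc i mod length q))"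
  unfolding periodic_orbit_def by blast

lemma sum_shift:
  fixes f :: "nat \<Rightarrow> 'a::comm_monoid_add"
  assumes "0 < L" shows "(\<Sum>i<L. f (Suc i mod L)) = (\<Sum>i<L. f i)"
proof -
  obtain m where L: "L = Suc m" using assms by (cases L) auto
  have "(\<Sum>i<Suc m. f (Suc i mod Suc m)) = (\<Sum>i<m. f (Suc i mod Suc m)) + f (Suc m mod Suc m)"
    by simp
  also have "(\<Sum>i<m. f (Suc i mod Suc m)) = (\<Sum>i<m. f (Suc i))"
    by (intro sum.cong) auto
  also have "(\<Sum>i<m. f (Suc i)) + f (Suc m mod Suc m) = (\<Sum>i<Suc m. f i)"
    by (subst sum.lessThan_Suc_shift) (simp add: add.commute)
  finally show ?thesis using L by simp
qed

lemma psi_const: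
  assumes "periodic_orbit billiard_step q" "i < length q"
  shows "psi (q!i) = psi (q!0)"
  using assms(2)
proof (induction i)
  case 0 then show ?case by simp
next
  case (Suc i)
  then have "i < length q" by simp
  then have "billiard_step (q!i) (q!(Suc i mod length q))" using orbit_step[OF assms(1)] by simp
  then have "psi (q!Suc i) = psi (q!i)" using psi_step Suc.prems by simp
  then show ?case using Suc by simp
qed

lemma orbit_in_phase: "periodic_orbit billiard_step q \<Longrightarrow> i < length q \<Longrightarrow> in_phase (q!i)"
  using orbit_step step_basic by metis

definition N :: "phase list \<Rightarrow> nat \<Rightarrow> nat" where
  "N q k = card {i. i < length q \<and> side (fst (q!i)) = k}"

lemma sum_ind: "(\<Sum>i<L. (if side (fst (q!i)) = k then (c::real) else 0)) = c * real (card {i. i < L \<and> side (fst (q!i)) = k})"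
proof -
  have "(\<Sum>i<L. (if side (fst (q!i)) = k then c else 0)) = (\<Sum>i\<in>{i. i < L \<and> side (fst (q!i)) = k}. c)"
  proof -
    have e: "{..<L} \<inter> {x. side (fst (q ! x)) = k} = {i. i < L \<and> side (fst (q!i)) = k}" by auto
    show ?thesis by (subst sum.If_cases) (simp_all add: e)
  qed
  then show ?thesis by simp
qed

lemma orbit_counts:
  assumes "periodic_orbit billiard_step q"
  defines "T \<equiv> (\<Sum>i<length q. len (q!i) (q!(Suc i mod length q)))"
  shows "T * cos (psi (q!0)) = 2 * N q 4" "T * cos (psi (q!0)) = 2 * N q 2"
        "T * sin (psi (q!0)) = 2 * N q 1" "T * sin (psi (q!0)) = 2 * N q 3"
proof -
  let ?L = "length q"
  have L: "0 < ?L" using assms(1) unfolding periodic_orbit_def by auto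
  have st: "\<And>i. i < ?L \<Longrightarrow> billiard_step (q!i) (q!(Suc i mod ?L))" using orbit_step[OF assms(1)] by blast
  have pc: "\<And>i. i < ?L \<Longrightarrow> psi (q!i) = psi (q!0)" using psi_const[OF assms(1)] by blast
  have gen: "(\<Sum>i<?L. len (q!i) (q!(Suc i mod ?L)) * c (psi (q!0))) = 2 * N q k"
    if h: "\<And>x y. billiard_step x y \<Longrightarrow> G y - G x + (if side (fst y) = k then 2 else 0) = len x y * c (psi x)"
    for G :: "phase \<Rightarrow> real" and k c
  proof -
    have "(\<Sum>i<?L. len (q!i) (q!(Suc i mod ?L)) * c (psi (q!0)))
        = (\<Sum>i<?L. G (q!(Suc i mod ?L)) - G (q!i) + (if side (fst (q!(Suc i mod ?L))) = k then 2 else 0))"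
      using h st pc by (intro sum.cong) auto
    also have "\<dots> = (\<Sum>i<?L. G (q!(Suc i mod ?L))) - (\<Sum>i<?L. G (q!i)) + (\<Sum>i<?L. (if side (fst (q!(Suc i mod ?L))) = k then 2 else 0))"
      by (simp add: sum.distrib sum_subtractf)
    also have "\<dots> = (\<Sum>i<?L. (if side (fst (q!i)) = k then 2 else 0))"
      using sum_shift[OF L, of "\<lambda>i. G (q!i)"] sum_shift[OF L, of "\<lambda>i. (if side (fst (q!i)) = k then (2::real) else 0)"]
      by simp
    also have "\<dots> = 2 * N q k" unfolding N_def sum_ind by simp
    finally show ?thesis .
  qed
  have Tc: "T * cos (psi (q!0)) = (\<Sum>i<?L. len (q!i) (q!(Suc i mod ?L)) * cos (psi (q!0)))"
    unfolding T_def by (simp add: sum_distrib_right)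
  have Ts: "T * sin (psi (q!0)) = (\<Sum>i<?L. len (q!i) (q!(Suc i mod ?L)) * sin (psi (q!0)))"
    unfolding T_def by (simp add: sum_distrib_right)
  show "T * cos (psi (q!0)) = 2 * N q 4" unfolding Tc by (rule gen[of Fx 4 cos]) (rule count_step(1))
  show "T * cos (psi (q!0)) = 2 * N q 2" unfolding Tc by (rule gen[of Gx 2 cos]) (rule count_step(2))
  show "T * sin (psi (q!0)) = 2 * N q 1" unfolding Ts by (rule gen[of Fy 1 sin]) (rule count_step(3))
  show "T * sin (psi (q!0)) = 2 * N q 3" unfolding Ts by (rule gen[of Gy 3 sin]) (rule count_step(4))
qed

definition Hh :: "nat \<Rightarrow> real" where "Hh k = (if hor k then 1 else 0)"

lemma lorbit_rec:
  assumes "lam > 0" "periodic_orbit (lambda_step lam) qs" "m \<le> length qs"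
  shows "psi (qs!(m mod length qs)) = lam^m * psi (qs!0)
     + (1 - lam) * (pi/2) * (\<Sum>j<m. lam^(m - 1 - j) * Hh (side (fst (qs!(Suc j mod length qs)))))"
  using assms(3)
proof (induction m)
  case 0 then show ?case by simp
next
  case (Suc m)
  let ?L = "length qs"
  let ?a = "\<lambda>j. Hh (side (fst (qs!(Suc j mod ?L))))"
  have m: "m < ?L" using Suc.prems by simp
  have st: "lambda_step lam (qs!m) (qs!(Suc m mod ?L))" using orbit_step[OF assms(2) m] .
  have r: "psi (qs!(Suc m mod ?L)) = lam * psi (qs!m) + (1 - lam) * (pi/2) * ?a m"
    using psi_lstep[OF assms(1) st] unfolding Hh_def by simp
  have ih: "psi (qs!m) = lam^m * psi (qs!0) + (1 - lam) * (pi/2) * (\<Sum>j<m. lam^(m - 1 - j) * ?a j)"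
    using Suc m by simp
  have s: "lam * (\<Sum>j<m. lam^(m - 1 - j) * ?a j) = (\<Sum>j<m. lam^(Suc m - 1 - j) * ?a j)"
    unfolding sum_distrib_left
  proof (intro sum.cong refl)
    fix j assume "j \<in> {..<m}"
    then have "Suc m - 1 - j = Suc (m - 1 - j)" by auto
    then show "lam * (lam ^ (m - 1 - j) * ?a j) = lam ^ (Suc m - 1 - j) * ?a j" by simp
  qed
  have "psi (qs!(Suc m mod ?L)) = lam^Suc m * psi (qs!0) + (1 - lam) * (pi/2) * (lam * (\<Sum>j<m. lam^(m - 1 - j) * ?a j) + ?a m)"
    unfolding r ih by (simp add: algebra_simps)
  also have "lam * (\<Sum>j<m. lam^(m - 1 - j) * ?a j) + ?a m = (\<Sum>j<Suc m. lam^(Suc m - 1 - j) * ?a j)"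
    unfolding s by simp
  finally show ?case .
qed

lemma helper1: "(a::real) = b * a + (1 - c) * e * d \<Longrightarrow> (1 - b) * a = (1 - c) * (e * d)"
  by (simp add: algebra_simps)

lemma lorbit_psi:
  assumes "lam > 0" "lam \<noteq> 1" "periodic_orbit (lambda_step lam) qs"
  shows "psi (qs!0) * (\<Sum>i<length qs. lam^i)
     = (pi/2) * (\<Sum>j<length qs. lam^(length qs - 1 - j) * Hh (side (fst (qs!(Suc j mod length qs)))))"
proof -
  let ?L = "length qs"
  let ?S = "(\<Sum>j<?L. lam^(?L - 1 - j) * Hh (side (fst (qs!(Suc j mod ?L)))))"
  have L: "0 < ?L" using assms(3) unfolding periodic_orbit_def by auto
  have "psi (qs!0) = lam^?L * psi (qs!0) + (1 - lam) * (pi/2) * ?S"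
    using lorbit_rec[OF assms(1,3), of ?L] by simp
  then have "(1 - lam^?L) * psi (qs!0) = (1 - lam) * ((pi/2) * ?S)" using helper1 by blast
  then have "(1 - lam) * ((\<Sum>i<?L. lam^i) * psi (qs!0)) = (1 - lam) * ((pi/2) * ?S)"
    unfolding one_diff_power_eq by (simp add: algebra_simps)
  then have "(\<Sum>i<?L. lam^i) * psi (qs!0) = (pi/2) * ?S" using assms(2) by (simp only: mult_cancel_left) simp
  then show ?thesis by (simp only: mult.commute)
qed

lemma stable_relation:
  assumes q: "periodic_orbit billiard_step q"
    and lam: "\<And>n. lam n > 0" "\<And>n. lam n \<noteq> 1" "lam \<longlonglongrightarrow> 1"
    and qs: "\<And>n. periodic_orbit (lambda_step (lam n)) (qs n)" "\<And>n. itinerary (qs n) = itinerary q"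
    and conv: "(\<lambda>n. qs n ! 0) \<longlonglongrightarrow> q ! 0"
  shows "psi (q!0) * length q = (pi/2) * (\<Sum>j<length q. Hh (side (fst (q!j))))"
proof -
  let ?L = "length q"
  have L: "0 < ?L" using q unfolding periodic_orbit_def by auto
  have len: "length (qs n) = ?L" for n using arg_cong[OF qs(2)[of n], of length] by (simp add: itinerary_def)
  have sd: "k < ?L \<Longrightarrow> side (fst (qs n ! k)) = side (fst (q!k))" for n k
    using arg_cong[OF qs(2)[of n], of "\<lambda>l. l!k"] len by (simp add: itinerary_def)
  define h where "h k = Hh (side (fst (q!k)))" for k
  have eq: "psi (qs n!0) * (\<Sum>i<?L. lam n^i) = (pi/2) * (\<Sum>j<?L. lam n^(?L - 1 - j) * h (Suc j mod ?L))" for n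
    using lorbit_psi[OF lam(1,2) qs(1), of n] len sd L unfolding h_def by simp
  have p0: "psi (qs n!0) = (if hor (side (fst (q!0))) then pi/2 - \<bar>snd (qs n!0)\<bar> else \<bar>snd (qs n!0)\<bar>)" for n
    using sd[OF L] unfolding psi_def by simp
  have "(\<lambda>n. snd (qs n!0)) \<longlonglongrightarrow> snd (q!0)" using conv by (intro tendsto_snd)
  then have "(\<lambda>n. \<bar>snd (qs n!0)\<bar>) \<longlonglongrightarrow> \<bar>snd (q!0)\<bar>" by (intro tendsto_rabs)
  then have t1: "(\<lambda>n. psi (qs n!0)) \<longlonglongrightarrow> psi (q!0)"
    unfolding p0 psi_def[of "q!0"] by (cases "hor (side (fst (q!0)))") (auto intro: tendsto_intros)
  have t2: "(\<lambda>n. \<Sum>i<?L. lam n^i) \<longlonglongrightarrow> (\<Sum>i<?L. 1^i)"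
    by (intro tendsto_sum tendsto_power lam(3))
  have t3: "(\<lambda>n. (\<Sum>j<?L. lam n^(?L - 1 - j) * h (Suc j mod ?L))) \<longlonglongrightarrow> (\<Sum>j<?L. 1^(?L - 1 - j) * h (Suc j mod ?L))"
    by (intro tendsto_sum tendsto_mult tendsto_power lam(3) tendsto_const)
  have A: "(\<lambda>n. psi (qs n!0) * (\<Sum>i<?L. lam n^i)) \<longlonglongrightarrow> psi (q!0) * ?L"
    using tendsto_mult[OF t1 t2] by simp
  have B: "(\<lambda>n. psi (qs n!0) * (\<Sum>i<?L. lam n^i)) \<longlonglongrightarrow> (pi/2) * (\<Sum>j<?L. h (Suc j mod ?L))"
    unfolding eq using tendsto_mult[OF tendsto_const t3, of "pi/2"] by simp
  have "psi (q!0) * ?L = (pi/2) * (\<Sum>j<?L. h (Suc j mod ?L))" using LIMSEQ_unique[OF A B] .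
  also have "(\<Sum>j<?L. h (Suc j mod ?L)) = (\<Sum>j<?L. h j)" using sum_shift[OF L] .
  finally show ?thesis unfolding h_def .
qed

lemma Hh_sum: "(\<Sum>j<L. Hh (side (fst (q!j)))) = real (card {i. i < L \<and> side (fst (q!i)) = 1}) + real (card {i. i < L \<and> side (fst (q!i)) = 3})"
proof -
  have "(\<Sum>j<L. Hh (side (fst (q!j)))) = (\<Sum>j<L. (if side (fst (q!j)) = 1 then 1 else 0) + (if side (fst (q!j)) = 3 then 1 else 0))"
    by (intro sum.cong) (auto simp: Hh_def hor_def)
  then show ?thesis by (simp add: sum.distrib sum_ind[where c=1])
qed

lemma three_dvd_sq: "(3::nat) dvd x^2 \<Longrightarrow> 3 dvd x"
proof -
  assume h: "3 dvd x^2"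
  have e: "x^2 mod 3 = (x mod 3)^2 mod 3" by (simp add: power_mod)
  have "x mod 3 < 3" by simp
  then consider "x mod 3 = 0" | "x mod 3 = 1" | "x mod 3 = 2" by linarith
  then show "3 dvd x"
  proof cases
    case 1 then show ?thesis by auto
  next
    case 2 then have "x^2 mod 3 = 1" using e by simp
    then show ?thesis using h by auto
  next
    case 3 then have "x^2 mod 3 = 1" using e by simp
    then show ?thesis using h by auto
  qed
qed

lemma no_sqrt3: "(x::nat)^2 = 3 * y^2 \<Longrightarrow> y = 0"
proof (induction y arbitrary: x rule: less_induct)
  case (less y x)
  show ?case
  proof (rule ccontr)
    assume y0: "y \<noteq> 0"
    have "3 dvd x^2" using less.prems by simp
    then obtain z where z: "x = 3 * z" using three_dvd_sq by blast
    then have "y^2 = 3 * z^2" using less.prems by (simp add: power_mult_distrib)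
    then have "3 dvd y^2" by simp
    then obtain w where w: "y = 3 * w" using three_dvd_sq by blast
    then have "z^2 = 3 * w^2" using \<open>y^2 = 3 * z^2\<close> by (simp add: power_mult_distrib)
    moreover have "w < y" using w y0 by simp
    ultimately have "w = 0" using less.IH by blast
    then show False using w y0 by simp
  qed
qed

fun Pseq :: "int \<Rightarrow> int \<Rightarrow> nat \<Rightarrow> int" where
  "Pseq p q 0 = p"
| "Pseq p q (Suc k) = (Pseq p q k)^2 - 2 * q^(2^(Suc k))"

lemma Pseq_coprime: "coprime p q \<Longrightarrow> coprime (Pseq p q k) q"
proof (induction k)
  case 0 then show ?case by simp
next
  case (Suc k)
  have c2: "coprime ((Pseq p q k)^2) q" using Suc by simp
  show ?case
  proof (rule coprimeI)
    fix d assume d1: "d dvd Pseq p q (Suc k)" and d2: "d dvd q"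
    have "q dvd q^(2^(Suc k))" by (rule dvd_power) simp
    then have "d dvd 2 * q^(2^(Suc k))" using d2 dvd_trans dvd_mult by blast
    then have "d dvd (Pseq p q k)^2" using d1
      by (metis Pseq.simps(2) diff_add_cancel dvd_add)
    then show "is_unit d" using c2 d2 coprime_common_divisor by blast
  qed
qed

lemma cseq:
  fixes q :: int and c :: "nat \<Rightarrow> real"
  assumes "q \<noteq> 0" "c 0 = p / q" "\<And>k. c (Suc k) = (c k)^2 - 2"
  shows "c k = Pseq p q k / q^(2^k)"
proof (induction k)
  case 0 then show ?case using assms by simp
next
  case (Suc k)
  have qq: "(real_of_int q)^(2 * 2^k) = (real_of_int q)^(2^k) * (real_of_int q)^(2^k)"
    by (simp add: mult_2 power_add)
  have nz: "(real_of_int q)^(2^k) \<noteq> 0" using assms(1) by simp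
  show ?case unfolding assms(3) Suc using nz
    by (simp add: field_simps power2_eq_square qq)
qed

lemma nt_lemma:
  fixes a b :: nat and psi :: real
  assumes ab: "a + b > 0" and e1: "psi * (a + b) = (pi/2) * a" and e2: "a * cos psi = b * sin psi"
  shows "a = 0 \<or> b = 0 \<or> a = b"
proof (rule ccontr)
  assume "\<not> ?thesis"
  then have a0: "a > 0" and b0: "b > 0" and ne: "a \<noteq> b" by auto
  define M where "M = a + b"
  have M0: "M > 0" using ab M_def by simp
  have "psi * (2 * real M) = pi * a" using e1 unfolding M_def by (simp add: algebra_simps)
  then have ps: "psi = pi * a / (2 * M)" using M0 by (simp add: eq_divide_eq)
  have psb: "0 < psi" "psi < pi/2"
    using a0 b0 M0 unfolding ps M_def by (auto simp: field_simps)
  have cp: "cos psi > 0" using psb by (intro cos_gt_zero_pi) auto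
  have sp: "sin psi = a * cos psi / b" using e2 b0 by (simp add: field_simps)
  have "(sin psi)^2 + (cos psi)^2 = 1" by simp
  then have "(a * cos psi / b)^2 + (cos psi)^2 = 1" using sp by simp
  then have "real a^2 * (cos psi)^2 / real b^2 + (cos psi)^2 = 1"
    by (simp add: power_divide power_mult_distrib)
  then have "real a^2 * (cos psi)^2 + real b^2 * (cos psi)^2 = real b^2" using b0
    by (simp add: field_simps)
  then have h: "(cos psi)^2 * (real a^2 + real b^2) = real b^2" by (simp add: algebra_simps)
  have "real b^2 > 0" using b0 by simp
  then have "real a^2 + real b^2 > 0" by (metis add_nonneg_pos zero_le_power2)
  then have cc: "(cos psi)^2 = real b^2 / (real a^2 + real b^2)" using h by (subst nonzero_eq_divide_eq) auto
  define x where "x = pi * a / M"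
  have x2: "x = 2 * psi" unfolding x_def ps using M0 by simp
  have cx: "cos x = (real b^2 - real a^2) / (real a^2 + real b^2)"
    unfolding x2 cos_double_cos cc using a0 by (simp add: field_simps)
  define c where "c k = 2 * cos (2^k * x)" for k :: nat
  have crec: "c (Suc k) = (c k)^2 - 2" for k
  proof -
    have "c (Suc k) = 2 * cos (2 * (2^k * x))" unfolding c_def by (simp add: mult.assoc)
    also have "\<dots> = (c k)^2 - 2" unfolding cos_double_cos c_def by (simp add: power2_eq_square)
    finally show ?thesis .
  qed
  define S where "S = (\<lambda>r::nat. 2 * cos (pi * r / M)) ` {..<2*M}"
  have cS: "c k \<in> S" for k
  proof -
    define m where "m = a * 2^k"
    define r where "r = m mod (2*M)"
    define t where "t = m div (2*M)"
    have mr: "m = 2*M*t + r" unfolding r_def t_def by simp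
    have r2: "r < 2*M" unfolding r_def using M0 by simp
    have "2^k * x = pi * r / M + 2 * real t * pi"
    proof -
      have "2^k * x = pi * m / M" unfolding x_def m_def by (simp add: field_simps)
      also have "\<dots> = pi * (2*M*t + r) / M" using mr by (metis of_nat_add of_nat_mult)
      also have "\<dots> = pi * r / M + 2 * real t * pi" using M0 by (simp add: field_simps)
      finally show ?thesis .
    qed
    then have "c k = 2 * cos (pi * r / M)" unfolding c_def by (simp add: cos_add)
    then show ?thesis unfolding S_def using r2 by blast
  qed
  have "\<not> inj c"
  proof
    assume "inj c"
    have "finite S" unfolding S_def by simp
    then have "finite (range c)" using cS by (meson finite_subset image_subset_iff)
    then have "finite (UNIV :: nat set)" using \<open>inj c\<close> finite_imageD by blast
    then show False by simp
  qed
  then obtain j k where jk: "j < k" "c j = c k"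
    unfolding inj_def by (metis linorder_neqE_nat)
  define N0 :: int where "N0 = 2 * (int b^2 - int a^2)"
  define M0 :: int where "M0 = int a^2 + int b^2"
  have M0p: "M0 > 0" unfolding M0_def using a0 by (metis add_pos_nonneg of_nat_0_less_iff zero_le_power2 zero_less_power)
  define g where "g = gcd N0 M0"
  define p where "p = N0 div g"
  define q where "q = M0 div g"
  have gp: "g > 0" unfolding g_def using M0p by (simp add: gcd_pos_int)
  have N0e: "N0 = p * g" unfolding p_def g_def by simp
  have M0e: "M0 = q * g" unfolding q_def g_def by simp
  have qp: "q > 0" using M0p gp M0e by (simp add: zero_less_mult_iff)
  have cop: "coprime p q" unfolding p_def q_def g_def using M0p by (intro div_gcd_coprime) auto
  have c0: "c 0 = p / q"
  proof -
    have "c 0 = 2 * cos x" unfolding c_def by simp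
    also have "\<dots> = real_of_int N0 / real_of_int M0" unfolding cx N0_def M0_def by simp
    also have "\<dots> = p / q" unfolding N0e M0e using gp by simp
    finally show ?thesis .
  qed
  show False
  proof (cases "q = 1")
    case True
    have "\<bar>c 0\<bar> \<le> 2" unfolding c_def using abs_cos_le_one[of x] by (simp add: abs_mult)
    then have pb: "-2 \<le> p" "p \<le> 2" using c0 True by auto
    have eq: "2 * (int b^2 - int a^2) = p * (int a^2 + int b^2)"
      using N0e M0e True unfolding N0_def M0_def by simp
    have "p = -2 \<or> p = -1 \<or> p = 0 \<or> p = 1 \<or> p = 2" using pb by auto
    then show False
    proof (elim disjE)
      assume "p = -2" then have "int b^2 = 0" using eq by simp
      then show False using b0 by simp
    next
      assume "p = 2" then have "int a^2 = 0" using eq by simp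
      then show False using a0 by simp
    next
      assume "p = 0" then have "int b^2 = int a^2" using eq by simp
      then have "int b = int a" using power2_eq_iff_nonneg by (metis of_nat_0_le_iff)
      then have "b = a" by simp
      then show False using ne by simp
    next
      assume "p = 1" then have "int (b^2) = int (3 * a^2)" using eq by simp
      then have "b^2 = 3 * a^2" by (simp only: of_nat_eq_iff)
      then show False using no_sqrt3 a0 by blast
    next
      assume "p = -1" then have "int (a^2) = int (3 * b^2)" using eq by simp
      then have "a^2 = 3 * b^2" by (simp only: of_nat_eq_iff)
      then show False using no_sqrt3 b0 by blast
    qed
  next
    case False
    then have q1: "q > 1" using qp by simp
    have cf: "c n = Pseq p q n / q^(2^n)" for n
      using cseq[of q c p n] qp c0 crec by simp
    have "real_of_int (Pseq p q j) * real_of_int q^(2^k) = real_of_int (Pseq p q k) * real_of_int q^(2^j)"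
      using jk(2) unfolding cf using qp by (simp add: field_simps)
    then have E: "Pseq p q j * q^(2^k) = Pseq p q k * q^(2^j)"
      by (metis of_int_eq_iff of_int_mult of_int_power)
    define e :: nat where "e = 2^k - 2^j"
    have epos: "e > 0" unfolding e_def using jk(1) by (simp add: power_strict_increasing)
    have "(2::nat)^k = 2^j + e" unfolding e_def using jk(1)
      by (simp add: power_increasing less_imp_le)
    then have "q^(2^k) = q^(2^j) * q^e" by (simp add: power_add)
    then have "Pseq p q j * q^e * q^(2^j) = Pseq p q k * q^(2^j)" using E by (simp add: algebra_simps)
    then have "Pseq p q j * q^e = Pseq p q k" using qp by simp
    moreover have "q dvd q^e" using epos by (simp add: dvd_power)
    ultimately have "q dvd Pseq p q k" by (metis dvd_mult)
    moreover have "coprime (Pseq p q k) q" using Pseq_coprime[OF cop] .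
    ultimately have "\<bar>q\<bar> = 1" using coprime_common_divisor_int dvd_refl by blast
    then show False using q1 by simp
  qed
qed

definition fp :: "real \<Rightarrow> real" where
  "fp s = (if s < 1 then 2 - s else if s < 2 then 4 - s else if s < 3 then 6 - s else 4 - s)"
definition fm :: "real \<Rightarrow> real" where
  "fm s = (if s < 1 then 4 - s else if s < 2 then 2 - s else if s < 3 then 4 - s else 6 - s)"
definition f0 :: "real \<Rightarrow> real" where
  "f0 s = (if s < 1 then 3 - s else if s < 2 then 5 - s else if s < 3 then 3 - s else 5 - s)"

lemma sin_inj_half:
  assumes "\<bar>a\<bar> \<le> pi/2" "\<bar>b\<bar> \<le> pi/2" "sin a = sin b" shows "a = b"
proof -
  have "arcsin (sin a) = arcsin (sin b)" using assms(3) by simp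
  then show ?thesis using assms(1,2) by (simp add: arcsin_sin abs_le_iff)
qed

lemma step_pi4:
  assumes "billiard_step x y" "snd x = pi/4"
  shows "snd y = pi/4 \<and> fst y = fp (fst x)"
proof -
  obtain t where st: "t > 0" "bpt (fst y) = bpt (fst x) + t *\<^sub>R dir (fst x) (snd x)"
    "sin (snd y) = dir (fst x) (snd x) \<bullet> tng (side (fst y))" "in_phase x" "in_phase y"
    using step_basic[OF assms(1)] by metis
  define c where "c = sqrt 2 / 2"
  have cp: "c > 0" unfolding c_def by simp
  have sc: "sin (pi/4) = c" "cos (pi/4) = c" unfolding c_def by (simp_all add: sin_45 cos_45)
  have u: "t * c > 0" using st(1) cp by simp
  have fy: "fst y = fp (fst x) \<and> sin (snd y) = c"
    using in_phase_cases[OF st(4)] in_phase_cases[OF st(5)] st(2,3) u assms(2)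
    by (auto simp: dir1 dir2 dir3 dir4 sc fp_def tng_def)
  have "\<bar>snd y\<bar> \<le> pi/2" using in_phase_th[OF st(5)] by simp
  then have "snd y = pi/4" using fy sc sin_inj_half[of "snd y" "pi/4"] by simp
  then show ?thesis using fy by simp
qed

lemma step_mpi4:
  assumes "billiard_step x y" "snd x = - (pi/4)"
  shows "snd y = - (pi/4) \<and> fst y = fm (fst x)"
proof -
  obtain t where st: "t > 0" "bpt (fst y) = bpt (fst x) + t *\<^sub>R dir (fst x) (snd x)"
    "sin (snd y) = dir (fst x) (snd x) \<bullet> tng (side (fst y))" "in_phase x" "in_phase y"
    using step_basic[OF assms(1)] by metis
  define c where "c = sqrt 2 / 2"
  have cp: "c > 0" unfolding c_def by simp
  have sc: "sin (pi/4) = c" "cos (pi/4) = c" unfolding c_def by (simp_all add: sin_45 cos_45)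
  have u: "t * c > 0" using st(1) cp by simp
  have fy: "fst y = fm (fst x) \<and> sin (snd y) = - c"
    using in_phase_cases[OF st(4)] in_phase_cases[OF st(5)] st(2,3) u assms(2)
    by (auto simp: dir1 dir2 dir3 dir4 sc fm_def tng_def)
  have "\<bar>snd y\<bar> \<le> pi/2" using in_phase_th[OF st(5)] by simp
  then have "snd y = - (pi/4)" using fy sc sin_inj_half[of "snd y" "- (pi/4)"] by simp
  then show ?thesis using fy by simp
qed

lemma step_0:
  assumes "billiard_step x y" "snd x = 0"
  shows "snd y = 0 \<and> fst y = f0 (fst x)"
proof -
  obtain t where st: "t > 0" "bpt (fst y) = bpt (fst x) + t *\<^sub>R dir (fst x) (snd x)"
    "sin (snd y) = dir (fst x) (snd x) \<bullet> tng (side (fst y))" "in_phase x" "in_phase y"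
    using step_basic[OF assms(1)] by metis
  have fy: "fst y = f0 (fst x) \<and> sin (snd y) = 0"
    using in_phase_cases[OF st(4)] in_phase_cases[OF st(5)] st(1,2,3) assms(2)
    by (auto simp: dir1 dir2 dir3 dir4 f0_def tng_def)
  have "\<bar>snd y\<bar> \<le> pi/2" using in_phase_th[OF st(5)] by simp
  then have "snd y = 0" using fy sin_inj_half[of "snd y" 0] by simp
  then show ?thesis using fy by simp
qed

definition valid :: "real \<Rightarrow> bool" where "valid s \<longleftrightarrow> 0 \<le> s \<and> s < 4 \<and> s \<notin> \<int>"

definition nxt :: "bool \<Rightarrow> nat \<Rightarrow> nat" where
  "nxt b k = (if b then k mod 4 + 1 else (k + 2) mod 4 + 1)"

definition fs :: "bool \<Rightarrow> real \<Rightarrow> real" where "fs b = (if b then fp else fm)"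

lemma notint_shift: "(c::real) \<in> \<int> \<Longrightarrow> s \<notin> \<int> \<Longrightarrow> c - s \<notin> \<int>"
proof
  assume "c \<in> \<int>" "s \<notin> \<int>" "c - s \<in> \<int>"
  then have "c - (c - s) \<in> \<int>" using Ints_diff by blast
  then show False using \<open>s \<notin> \<int>\<close> by simp
qed

lemma valid_cases: "valid s \<Longrightarrow> (0 < s \<and> s < 1 \<and> side s = 1) \<or> (1 < s \<and> s < 2 \<and> side s = 2) \<or> (2 < s \<and> s < 3 \<and> side s = 3) \<or> (3 < s \<and> s < 4 \<and> side s = 4)"
  unfolding valid_def using side_cases by blast


lemma valid_lin: "real k < t \<Longrightarrow> t < real k + 1 \<Longrightarrow> k \<le> 3 \<Longrightarrow> t \<notin> \<int> \<Longrightarrow> valid t \<and> side t = k + 1"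
proof -
  assume h: "real k < t" "t < real k + 1" "k \<le> 3" "t \<notin> \<int>"
  have "floor t = int k" using h(1,2) by (simp add: floor_eq_iff)
  moreover have "t < 4" using h(2,3) by linarith
  ultimately show ?thesis using h unfolding valid_def side_def by simp
qed

lemma fs_props:
  assumes "valid s"
  shows "valid (fs b s) \<and> side (fs b s) = nxt b (side s)"
proof -
  have ni: "\<And>c::real. c \<in> \<int> \<Longrightarrow> c - s \<notin> \<int>" using assms notint_shift unfolding valid_def by blast
  have n2: "2 - s \<notin> \<int>" "4 - s \<notin> \<int>" "6 - s \<notin> \<int>" using ni by auto
  consider "0 < s \<and> s < 1 \<and> side s = 1" | "1 < s \<and> s < 2 \<and> side s = 2" | "2 < s \<and> s < 3 \<and> side s = 3" | "3 < s \<and> s < 4 \<and> side s = 4"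
    using valid_cases[OF assms] by blast
  then show ?thesis
  proof cases
    case 1
    then have e: "fp s = 2 - s" "fm s = 4 - s" by (simp_all add: fp_def fm_def)
    have v: "valid (2 - s) \<and> side (2 - s) = 2" using valid_lin[of 1 "2 - s"] 1 n2 by simp
    have w: "valid (4 - s) \<and> side (4 - s) = 4" using valid_lin[of 3 "4 - s"] 1 n2 by simp
    show ?thesis using v w 1 by (cases b) (simp_all add: fs_def e nxt_def)
  next
    case 2
    then have e: "fp s = 4 - s" "fm s = 2 - s" by (simp_all add: fp_def fm_def)
    have v: "valid (4 - s) \<and> side (4 - s) = 3" using valid_lin[of 2 "4 - s"] 2 n2 by simp
    have w: "valid (2 - s) \<and> side (2 - s) = 1" using valid_lin[of 0 "2 - s"] 2 n2 by simp
    show ?thesis using v w 2 by (cases b) (simp_all add: fs_def e nxt_def)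
  next
    case 3
    then have e: "fp s = 6 - s" "fm s = 4 - s" by (simp_all add: fp_def fm_def)
    have v: "valid (6 - s) \<and> side (6 - s) = 4" using valid_lin[of 3 "6 - s"] 3 n2 by simp
    have w: "valid (4 - s) \<and> side (4 - s) = 2" using valid_lin[of 1 "4 - s"] 3 n2 by simp
    show ?thesis using v w 3 by (cases b) (simp_all add: fs_def e nxt_def)
  next
    case 4
    then have e: "fp s = 4 - s" "fm s = 6 - s" by (simp_all add: fp_def fm_def)
    have v: "valid (4 - s) \<and> side (4 - s) = 1" using valid_lin[of 0 "4 - s"] 4 n2 by simp
    have w: "valid (6 - s) \<and> side (6 - s) = 3" using valid_lin[of 2 "6 - s"] 4 n2 by simp
    show ?thesis using v w 4 by (cases b) (simp_all add: fs_def e nxt_def)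
  qed
qed

lemma f0_props:
  assumes "valid s"
  shows "valid (f0 s) \<and> side (f0 s) = (side s + 1) mod 4 + 1 \<and> f0 (f0 s) = s"
proof -
  have ni: "\<And>c::real. c \<in> \<int> \<Longrightarrow> c - s \<notin> \<int>" using assms notint_shift unfolding valid_def by blast
  have n2: "3 - s \<notin> \<int>" "5 - s \<notin> \<int>" using ni by auto
  consider "0 < s \<and> s < 1 \<and> side s = 1" | "1 < s \<and> s < 2 \<and> side s = 2" | "2 < s \<and> s < 3 \<and> side s = 3" | "3 < s \<and> s < 4 \<and> side s = 4"
    using valid_cases[OF assms] by blast
  then show ?thesis
  proof cases
    case 1
    then have e: "f0 s = 3 - s" "f0 (3 - s) = s" by (simp_all add: f0_def)
    have v: "valid (3 - s) \<and> side (3 - s) = 3" using valid_lin[of 2 "3 - s"] 1 n2 by simp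
    show ?thesis using v 1 e by simp
  next
    case 2
    then have e: "f0 s = 5 - s" "f0 (5 - s) = s" by (simp_all add: f0_def)
    have v: "valid (5 - s) \<and> side (5 - s) = 4" using valid_lin[of 3 "5 - s"] 2 n2 by simp
    show ?thesis using v 2 e by simp
  next
    case 3
    then have e: "f0 s = 3 - s" "f0 (3 - s) = s" by (simp_all add: f0_def)
    have v: "valid (3 - s) \<and> side (3 - s) = 1" using valid_lin[of 0 "3 - s"] 3 n2 by simp
    show ?thesis using v 3 e by simp
  next
    case 4
    then have e: "f0 s = 5 - s" "f0 (5 - s) = s" by (simp_all add: f0_def)
    have v: "valid (5 - s) \<and> side (5 - s) = 2" using valid_lin[of 1 "5 - s"] 4 n2 by simp
    show ?thesis using v 4 e by simp
  qed
qed


lemma in_phase_valid: "in_phase x \<Longrightarrow> valid (fst x)"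
  unfolding in_phase_def valid_def by auto

lemma side_range: "valid s \<Longrightarrow> side s \<in> {1,2,3,4}"
  using valid_cases by blast

lemma nxt_vals: "nxt True 1 = 2" "nxt True 2 = 3" "nxt True 3 = 4" "nxt True 4 = 1"
  "nxt False 1 = 4" "nxt False 2 = 1" "nxt False 3 = 2" "nxt False 4 = 3"
  by (simp_all add: nxt_def)

lemma nxt_ne: "k \<in> {1,2,3,4} \<Longrightarrow> nxt b k \<noteq> k \<and> nxt b (nxt b k) \<noteq> k \<and> nxt b (nxt b (nxt b k)) \<noteq> k"
proof -
  assume "k \<in> {1,2,3,4}"
  then have "1 \<le> k \<and> k \<le> 4" by auto
  then show ?thesis unfolding nxt_def by (cases b) (simp_all; presburger)+
qed

lemma nxt_mod: "nxt b k mod 4 = (k + (if b then 1 else 3)) mod 4"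
  unfolding nxt_def by (cases b) (simp_all; presburger)+

lemma fs4:
  assumes "valid s" shows "fs b (fs b (fs b (fs b s))) = s"
proof -
  consider "0 < s \<and> s < 1" | "1 < s \<and> s < 2" | "2 < s \<and> s < 3" | "3 < s \<and> s < 4"
    using valid_cases[OF assms] by blast
  then show ?thesis
  proof cases
    case 1
    have a: "fp s = 2 - s" "fp (2 - s) = 2 + s" "fp (2 + s) = 4 - s" "fp (4 - s) = s"
      using 1 by (simp_all add: fp_def)
    have b: "fm s = 4 - s" "fm (4 - s) = 2 + s" "fm (2 + s) = 2 - s" "fm (2 - s) = s"
      using 1 by (simp_all add: fm_def)
    show ?thesis using a b by (simp add: fs_def)
  next
    case 2
    have a: "fp s = 4 - s" "fp (4 - s) = 2 + s" "fp (2 + s) = 2 - s" "fp (2 - s) = s"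
      using 2 by (simp_all add: fp_def)
    have b: "fm s = 2 - s" "fm (2 - s) = 2 + s" "fm (2 + s) = 4 - s" "fm (4 - s) = s"
      using 2 by (simp_all add: fm_def)
    show ?thesis using a b by (simp add: fs_def)
  next
    case 3
    have a: "fp s = 6 - s" "fp (6 - s) = s - 2" "fp (s - 2) = 4 - s" "fp (4 - s) = s"
      using 3 by (simp_all add: fp_def)
    have b: "fm s = 4 - s" "fm (4 - s) = s - 2" "fm (s - 2) = 6 - s" "fm (6 - s) = s"
      using 3 by (simp_all add: fm_def)
    show ?thesis using a b by (simp add: fs_def)
  next
    case 4
    have a: "fp s = 4 - s" "fp (4 - s) = s - 2" "fp (s - 2) = 6 - s" "fp (6 - s) = s"
      using 4 by (simp_all add: fp_def)
    have b: "fm s = 6 - s" "fm (6 - s) = s - 2" "fm (s - 2) = 4 - s" "fm (4 - s) = s"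
      using 4 by (simp_all add: fm_def)
    show ?thesis using a b by (simp add: fs_def)
  qed
qed

lemma orbit_iter:
  assumes "\<forall>i<length q. q!(Suc i mod length q) = g (q!i)" "i < length q"
  shows "q!((i + k) mod length q) = (g^^k) (q!i)"
proof (induction k)
  case 0 then show ?case using assms(2) by simp
next
  case (Suc k)
  have "(i + Suc k) mod length q = Suc ((i + k) mod length q) mod length q" by (simp add: mod_Suc_eq)
  moreover have "(i + k) mod length q < length q"
  proof -
    have "0 < length q" using assms(2) by linarith
    then show ?thesis by (rule mod_less_divisor)
  qed
  ultimately show ?case using assms(1) Suc by simp
qed

lemma prim_bound:
  assumes "primitive q" "0 < k" "\<forall>i<length q. q!((i + k) mod length q) = q!i"
  shows "length q \<le> k"
  using assms unfolding primitive_def by (meson not_le)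

lemma ping_pong_struct:
  assumes q: "periodic_orbit billiard_step q" "primitive q" and z: "\<forall>i<length q. snd (q!i) = 0"
  shows "length q = 2 \<and> side (fst (q!1)) = (side (fst (q!0)) + 1) mod 4 + 1"
proof -
  let ?L = "length q"
  define g where "g z = (f0 (fst z), (0::real))" for z :: phase
  have L: "0 < ?L" using q(1) unfolding periodic_orbit_def by auto
  have v: "\<And>i. i < ?L \<Longrightarrow> valid (fst (q!i))" using orbit_in_phase[OF q(1)] in_phase_valid by blast
  have gs: "\<forall>i<?L. q!(Suc i mod ?L) = g (q!i)"
  proof (intro allI impI)
    fix i assume i: "i < ?L"
    have st: "billiard_step (q!i) (q!(Suc i mod ?L))" by (rule orbit_step[OF q(1) i])
    have "snd (q!i) = 0" using z i by blast
    then have "snd (q!(Suc i mod ?L)) = 0 \<and> fst (q!(Suc i mod ?L)) = f0 (fst (q!i))"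
      by (rule step_0[OF st])
    then show "q!(Suc i mod ?L) = g (q!i)" unfolding g_def by (simp add: prod_eq_iff)
  qed
  have g2: "(g^^2) x = g (g x)" for x by (simp add: numeral_2_eq_2)
  have "\<forall>i<?L. q!((i + 2) mod ?L) = q!i"
  proof (intro allI impI)
    fix i assume i: "i < ?L"
    have "q!((i + 2) mod ?L) = (g^^2) (q!i)" using orbit_iter[OF gs i] .
    also have "\<dots> = (f0 (f0 (fst (q!i))), 0)" unfolding g2 g_def by simp
    also have "\<dots> = (fst (q!i), snd (q!i))" using f0_props[OF v[OF i]] z i by simp
    finally show "q!((i + 2) mod ?L) = q!i" by simp
  qed
  then have L2: "?L \<le> 2" using prim_bound[OF q(2), of 2] by simp
  have k: "side (fst (q!0)) \<in> {1,2,3,4}" using side_range[OF v[OF L]] .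
  have "?L \<noteq> 1"
  proof
    assume L1: "?L = 1"
    have "q!(Suc 0 mod ?L) = g (q!0)" using gs L by blast
    then have "q!0 = g (q!0)" using L1 by simp
    then have "fst (q!0) = f0 (fst (q!0))" unfolding g_def by (metis fst_conv)
    then have "side (fst (q!0)) = (side (fst (q!0)) + 1) mod 4 + 1"
      using f0_props[OF v[OF L]] by simp
    then show False using k by auto
  qed
  then have L2': "?L = 2" using L L2 by linarith
  have "q!(Suc 0 mod ?L) = g (q!0)" using gs L by blast
  then have "q!1 = g (q!0)" using L2' by simp
  then show ?thesis using L2' f0_props[OF v[OF L]] unfolding g_def by simp
qed

definition ang :: "bool \<Rightarrow> real" where "ang b = (if b then pi/4 else - (pi/4))"

lemma step_fs: "billiard_step x y \<Longrightarrow> snd x = ang b \<Longrightarrow> y = (fs b (fst x), ang b)"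
proof (cases b)
  case True
  assume "billiard_step x y" "snd x = ang b"
  then have "snd y = pi/4 \<and> fst y = fp (fst x)" using step_pi4 True by (simp add: ang_def)
  then show ?thesis using True by (simp add: ang_def fs_def prod_eq_iff)
next
  case False
  assume "billiard_step x y" "snd x = ang b"
  then have "snd y = - (pi/4) \<and> fst y = fm (fst x)" using step_mpi4 False by (simp add: ang_def)
  then show ?thesis using False by (simp add: ang_def fs_def prod_eq_iff)
qed

lemma fagnano_struct:
  assumes q: "periodic_orbit billiard_step q" and a: "\<forall>i<length q. \<bar>snd (q!i)\<bar> = pi/4"
  shows "\<exists>b. \<forall>i<length q. snd (q!i) = ang b \<and> q!(Suc i mod length q) = (fs b (fst (q!i)), ang b)"
proof -
  let ?L = "length q"
  have L: "0 < ?L" using q(1) unfolding periodic_orbit_def by auto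
  define b where "b = (snd (q!0) = pi/4)"
  have "\<bar>snd (q!0)\<bar> = pi/4" using a L by blast
  then have s0: "snd (q!0) = ang b" unfolding b_def ang_def by (cases "snd (q!0) \<ge> 0") auto
  have sn: "i < ?L \<Longrightarrow> snd (q!i) = ang b" for i
  proof (induction i)
    case 0 then show ?case using s0 by simp
  next
    case (Suc i)
    then have i: "i < ?L" "Suc i mod ?L = Suc i" by simp_all
    have "q!(Suc i mod ?L) = (fs b (fst (q!i)), ang b)"
      using step_fs[OF orbit_step[OF q(1) i(1)]] Suc i by simp
    then show ?case using i by simp
  qed
  show ?thesis using sn step_fs[OF orbit_step[OF q(1)]] by blast
qed

lemma fagnano_prim:
  assumes q: "periodic_orbit billiard_step q" "primitive q"
    and st: "\<forall>i<length q. snd (q!i) = ang b \<and> q!(Suc i mod length q) = (fs b (fst (q!i)), ang b)"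
  shows "length q = 4 \<and> fagnano_orbit q \<and> (\<forall>i<length q. side (fst (q!(Suc i mod length q))) = nxt b (side (fst (q!i))))"
proof -
  let ?L = "length q"
  define g where "g z = (fs b (fst z), ang b)" for z :: phase
  have L: "0 < ?L" using q(1) unfolding periodic_orbit_def by auto
  have v: "\<And>i. i < ?L \<Longrightarrow> valid (fst (q!i))" using orbit_in_phase[OF q(1)] in_phase_valid by blast
  have gs: "\<forall>i<?L. q!(Suc i mod ?L) = g (q!i)" using st unfolding g_def by blast
  have sides: "\<forall>i<?L. side (fst (q!(Suc i mod ?L))) = nxt b (side (fst (q!i)))"
  proof (intro allI impI)
    fix i assume i: "i < ?L"
    have "fst (q!(Suc i mod ?L)) = fs b (fst (q!i))" using st i by simp
    then show "side (fst (q!(Suc i mod ?L))) = nxt b (side (fst (q!i)))" using fs_props[OF v[OF i]] by simp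
  qed
  have g4: "(g^^4) x = g (g (g (g x)))" for x by (simp add: numeral_eq_Suc)
  have "\<forall>i<?L. q!((i + 4) mod ?L) = q!i"
  proof (intro allI impI)
    fix i assume i: "i < ?L"
    have "q!((i + 4) mod ?L) = (g^^4) (q!i)" using orbit_iter[OF gs i] .
    also have "\<dots> = (fs b (fs b (fs b (fs b (fst (q!i))))), ang b)" unfolding g4 g_def by simp
    also have "\<dots> = (fst (q!i), snd (q!i))" using fs4[OF v[OF i]] st i by simp
    finally show "q!((i + 4) mod ?L) = q!i" by simp
  qed
  then have L4: "?L \<le> 4" using prim_bound[OF q(2), of 4] by simp
  have q0: "q!0 = (g^^?L) (q!0)" using orbit_iter[OF gs L, of ?L] by simp
  obtain s where s: "fst (q!0) = s" by blast
  have qf: "s = fst ((g^^?L) (q!0))" using q0 s by metis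
  have vs: "valid s" using v[OF L] s by simp
  have k: "side s \<in> {1,2,3,4}" using side_range[OF vs] .
  have p1: "valid (fs b s)" "side (fs b s) = nxt b (side s)" using fs_props[OF vs] by auto
  have p2: "valid (fs b (fs b s))" "side (fs b (fs b s)) = nxt b (nxt b (side s))" using fs_props[OF p1(1)] p1 by auto
  have p3: "side (fs b (fs b (fs b s))) = nxt b (nxt b (nxt b (side s)))" using fs_props[OF p2(1)] p2 by auto
  have ne: "nxt b (side s) \<noteq> side s" "nxt b (nxt b (side s)) \<noteq> side s" "nxt b (nxt b (nxt b (side s))) \<noteq> side s"
    using nxt_ne[OF k] by auto
  have "?L \<noteq> 1" "?L \<noteq> 2" "?L \<noteq> 3"
  proof -
    show "?L \<noteq> 1"
    proof
      assume "?L = 1"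
      then have "s = fst (g (q!0))" using qf by simp
      then have e: "s = fs b s" unfolding g_def using s by simp
      have "side s = nxt b (side s)" using arg_cong[OF e, of side] p1(2) by (rule trans)
      then show False using ne(1) by metis
    qed
    show "?L \<noteq> 2"
    proof
      assume "?L = 2"
      then have "s = fst (g (g (q!0)))" using qf by (simp add: numeral_eq_Suc)
      then have e: "s = fs b (fs b s)" unfolding g_def using s by simp
      have "side s = nxt b (nxt b (side s))" using arg_cong[OF e, of side] p2(2) by (rule trans)
      then show False using ne(2) by metis
    qed
    show "?L \<noteq> 3"
    proof
      assume "?L = 3"
      then have "s = fst (g (g (g (q!0))))" using qf by (simp add: numeral_eq_Suc)
      then have e: "s = fs b (fs b (fs b s))" unfolding g_def using s by simp
      have "side s = nxt b (nxt b (nxt b (side s)))" using arg_cong[OF e, of side] p3 by (rule trans)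
      then show False using ne(3) by metis
    qed
  qed
  then have L4': "?L = 4" using L4 L by linarith
  have "fagnano_orbit q"
    unfolding fagnano_orbit_def
  proof (intro exI[of _ "if b then 1 else 3"] conjI allI impI)
    fix j assume j: "j < ?L"
    have kj: "side (fst (q!j)) \<in> {1,2,3,4}" using side_range[OF v[OF j]] .
    have "itinerary q ! (Suc j mod ?L) = nxt b (itinerary q ! j)"
      using sides j L by (simp add: itinerary_def)
    moreover have "nxt b (itinerary q ! j) mod 4 = (itinerary q ! j + (if b then 1 else 3)) mod 4"
      by (rule nxt_mod)
    ultimately show "itinerary q ! (Suc j mod ?L) mod 4 = (itinerary q ! j + (if b then 1 else 3)) mod 4"
      by simp
  qed auto
  then show ?thesis using L4' sides by blast
qed

lemma notint_between: "real k < x \<Longrightarrow> x < real k + 1 \<Longrightarrow> x \<notin> \<int>"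
proof
  assume h: "real k < x" "x < real k + 1" "x \<in> \<int>"
  then obtain m where m: "x = of_int m" by (auto elim: Ints_cases)
  then have "int k < m" "m < int k + 1" using h by linarith+
  then show False by linarith
qed

lemma step_data:
  assumes "in_phase x" "in_phase (s', th)" "bpt (fst x) = PP" "dir (fst x) (snd x) = DD" "bpt s' = QQ"
    "0 < t" "QQ = PP + t *\<^sub>R DD" "\<forall>\<tau>. 0 < \<tau> \<and> \<tau> < t \<longrightarrow> PP + \<tau> *\<^sub>R DD \<in> open_square"
    "sin th = DD \<bullet> tng (side s')"
  shows "billiard_step x (s', th)"
  unfolding billiard_step_def using assms by auto

definition fag_facts :: "real \<Rightarrow> real \<Rightarrow> real \<Rightarrow> real \<Rightarrow> real \<Rightarrow> bool" where
  "fag_facts al S C a t \<longleftrightarrow> 0 < al \<and> al < pi/2 \<and> S = sin al \<and> C = cos al \<and> 0 < S \<and> 0 < C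
     \<and> 0 < a \<and> a < 1 \<and> 0 < t \<and> a = t * C \<and> 1 - a = t * S"

lemma fag_p1:
  assumes F: "fag_facts al S C a t"
  shows "billiard_step (a, al) (1 + a, (pi/2 - al))"
proof (rule step_data)
  have f: "0 < al" "al < pi/2" "sin al = S" "cos al = C" "0 < S" "0 < C" "0 < a" "a < 1" "0 < t" "t * C = a" "t * S = 1 - a"
    using F unfolding fag_facts_def by auto
  have g: "sin (pi/2 - al) = C" "sin (al - pi/2) = - C" using f(4) by (simp_all add: sin_diff)
  have vx: "valid (a) \<and> side (a) = 1" using valid_lin[of 0 "a"] notint_between[of 0 "a"] f by simp
  have vy: "valid (1 + a) \<and> side (1 + a) = 2" using valid_lin[of 1 "1 + a"] notint_between[of 1 "1 + a"] f by simp
  show "in_phase (a, al)" using vx f unfolding in_phase_def valid_def by auto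
  show "in_phase (1 + a, (pi/2 - al))" using vy f unfolding in_phase_def valid_def by auto
  show "bpt (fst (a, al)) = (a, 0)" using f by (simp add: bpt_def)
  show "dir (fst (a, al)) (snd (a, al)) = (S, C)" using vx f by (simp add: dir_def nrm_def tng_def)
  show "bpt (1 + a) = (1, a)" using f by (simp add: bpt_def)
  show "0 < t" using f by simp
  show "(1, a) = (a, 0) + t *\<^sub>R (S, C)" using f by (simp add: algebra_simps)
  show "\<forall>\<tau>. 0 < \<tau> \<and> \<tau> < t \<longrightarrow> (a, 0) + \<tau> *\<^sub>R (S, C) \<in> open_square"
  proof (intro allI impI)
    fix \<tau> :: real assume h: "0 < \<tau> \<and> \<tau> < t"
    have m1: "\<tau> * S < t * S" using h f by (intro mult_strict_right_mono) auto
    have m2: "\<tau> * C < t * C" using h f by (intro mult_strict_right_mono) auto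
    have m: "0 < \<tau> * S" "\<tau> * S < 1 - a" "0 < \<tau> * C" "\<tau> * C < a"
      using h f m1 m2 by simp_all
    show "(a, 0) + \<tau> *\<^sub>R (S, C) \<in> open_square" using m f unfolding open_square_def by simp
  qed
  show "sin (pi/2 - al) = (S, C) \<bullet> tng (side (1 + a))" using vy g by (simp add: tng_def)
qed

lemma fag_p2:
  assumes F: "fag_facts al S C a t"
  shows "billiard_step (1 + a, al) (2 + a, (pi/2 - al))"
proof (rule step_data)
  have f: "0 < al" "al < pi/2" "sin al = S" "cos al = C" "0 < S" "0 < C" "0 < a" "a < 1" "0 < t" "t * C = a" "t * S = 1 - a"
    using F unfolding fag_facts_def by auto
  have g: "sin (pi/2 - al) = C" "sin (al - pi/2) = - C" using f(4) by (simp_all add: sin_diff)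
  have vx: "valid (1 + a) \<and> side (1 + a) = 2" using valid_lin[of 1 "1 + a"] notint_between[of 1 "1 + a"] f by simp
  have vy: "valid (2 + a) \<and> side (2 + a) = 3" using valid_lin[of 2 "2 + a"] notint_between[of 2 "2 + a"] f by simp
  show "in_phase (1 + a, al)" using vx f unfolding in_phase_def valid_def by auto
  show "in_phase (2 + a, (pi/2 - al))" using vy f unfolding in_phase_def valid_def by auto
  show "bpt (fst (1 + a, al)) = (1, a)" using f by (simp add: bpt_def)
  show "dir (fst (1 + a, al)) (snd (1 + a, al)) = (- C, S)" using vx f by (simp add: dir_def nrm_def tng_def)
  show "bpt (2 + a) = (1 - a, 1)" using f by (simp add: bpt_def)
  show "0 < t" using f by simp
  show "(1 - a, 1) = (1, a) + t *\<^sub>R (- C, S)" using f by (simp add: algebra_simps)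
  show "\<forall>\<tau>. 0 < \<tau> \<and> \<tau> < t \<longrightarrow> (1, a) + \<tau> *\<^sub>R (- C, S) \<in> open_square"
  proof (intro allI impI)
    fix \<tau> :: real assume h: "0 < \<tau> \<and> \<tau> < t"
    have m1: "\<tau> * S < t * S" using h f by (intro mult_strict_right_mono) auto
    have m2: "\<tau> * C < t * C" using h f by (intro mult_strict_right_mono) auto
    have m: "0 < \<tau> * S" "\<tau> * S < 1 - a" "0 < \<tau> * C" "\<tau> * C < a"
      using h f m1 m2 by simp_all
    show "(1, a) + \<tau> *\<^sub>R (- C, S) \<in> open_square" using m f unfolding open_square_def by simp
  qed
  show "sin (pi/2 - al) = (- C, S) \<bullet> tng (side (2 + a))" using vy g by (simp add: tng_def)
qed

lemma fag_p3:
  assumes F: "fag_facts al S C a t"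
  shows "billiard_step (2 + a, al) (3 + a, (pi/2 - al))"
proof (rule step_data)
  have f: "0 < al" "al < pi/2" "sin al = S" "cos al = C" "0 < S" "0 < C" "0 < a" "a < 1" "0 < t" "t * C = a" "t * S = 1 - a"
    using F unfolding fag_facts_def by auto
  have g: "sin (pi/2 - al) = C" "sin (al - pi/2) = - C" using f(4) by (simp_all add: sin_diff)
  have vx: "valid (2 + a) \<and> side (2 + a) = 3" using valid_lin[of 2 "2 + a"] notint_between[of 2 "2 + a"] f by simp
  have vy: "valid (3 + a) \<and> side (3 + a) = 4" using valid_lin[of 3 "3 + a"] notint_between[of 3 "3 + a"] f by simp
  show "in_phase (2 + a, al)" using vx f unfolding in_phase_def valid_def by auto
  show "in_phase (3 + a, (pi/2 - al))" using vy f unfolding in_phase_def valid_def by auto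
  show "bpt (fst (2 + a, al)) = (1 - a, 1)" using f by (simp add: bpt_def)
  show "dir (fst (2 + a, al)) (snd (2 + a, al)) = (- S, - C)" using vx f by (simp add: dir_def nrm_def tng_def)
  show "bpt (3 + a) = (0, 1 - a)" using f by (simp add: bpt_def)
  show "0 < t" using f by simp
  show "(0, 1 - a) = (1 - a, 1) + t *\<^sub>R (- S, - C)" using f by (simp add: algebra_simps)
  show "\<forall>\<tau>. 0 < \<tau> \<and> \<tau> < t \<longrightarrow> (1 - a, 1) + \<tau> *\<^sub>R (- S, - C) \<in> open_square"
  proof (intro allI impI)
    fix \<tau> :: real assume h: "0 < \<tau> \<and> \<tau> < t"
    have m1: "\<tau> * S < t * S" using h f by (intro mult_strict_right_mono) auto
    have m2: "\<tau> * C < t * C" using h f by (intro mult_strict_right_mono) auto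
    have m: "0 < \<tau> * S" "\<tau> * S < 1 - a" "0 < \<tau> * C" "\<tau> * C < a"
      using h f m1 m2 by simp_all
    show "(1 - a, 1) + \<tau> *\<^sub>R (- S, - C) \<in> open_square" using m f unfolding open_square_def by simp
  qed
  show "sin (pi/2 - al) = (- S, - C) \<bullet> tng (side (3 + a))" using vy g by (simp add: tng_def)
qed

lemma fag_p4:
  assumes F: "fag_facts al S C a t"
  shows "billiard_step (3 + a, al) (a, (pi/2 - al))"
proof (rule step_data)
  have f: "0 < al" "al < pi/2" "sin al = S" "cos al = C" "0 < S" "0 < C" "0 < a" "a < 1" "0 < t" "t * C = a" "t * S = 1 - a"
    using F unfolding fag_facts_def by auto
  have g: "sin (pi/2 - al) = C" "sin (al - pi/2) = - C" using f(4) by (simp_all add: sin_diff)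
  have vx: "valid (3 + a) \<and> side (3 + a) = 4" using valid_lin[of 3 "3 + a"] notint_between[of 3 "3 + a"] f by simp
  have vy: "valid (a) \<and> side (a) = 1" using valid_lin[of 0 "a"] notint_between[of 0 "a"] f by simp
  show "in_phase (3 + a, al)" using vx f unfolding in_phase_def valid_def by auto
  show "in_phase (a, (pi/2 - al))" using vy f unfolding in_phase_def valid_def by auto
  show "bpt (fst (3 + a, al)) = (0, 1 - a)" using f by (simp add: bpt_def)
  show "dir (fst (3 + a, al)) (snd (3 + a, al)) = (C, - S)" using vx f by (simp add: dir_def nrm_def tng_def)
  show "bpt (a) = (a, 0)" using f by (simp add: bpt_def)
  show "0 < t" using f by simp
  show "(a, 0) = (0, 1 - a) + t *\<^sub>R (C, - S)" using f by (simp add: algebra_simps)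
  show "\<forall>\<tau>. 0 < \<tau> \<and> \<tau> < t \<longrightarrow> (0, 1 - a) + \<tau> *\<^sub>R (C, - S) \<in> open_square"
  proof (intro allI impI)
    fix \<tau> :: real assume h: "0 < \<tau> \<and> \<tau> < t"
    have m1: "\<tau> * S < t * S" using h f by (intro mult_strict_right_mono) auto
    have m2: "\<tau> * C < t * C" using h f by (intro mult_strict_right_mono) auto
    have m: "0 < \<tau> * S" "\<tau> * S < 1 - a" "0 < \<tau> * C" "\<tau> * C < a"
      using h f m1 m2 by simp_all
    show "(0, 1 - a) + \<tau> *\<^sub>R (C, - S) \<in> open_square" using m f unfolding open_square_def by simp
  qed
  show "sin (pi/2 - al) = (C, - S) \<bullet> tng (side (a))" using vy g by (simp add: tng_def)
qed

lemma fag_m1: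
  assumes F: "fag_facts al S C a t"
  shows "billiard_step (1 - a, - al) (4 - a, (- (pi/2 - al)))"
proof (rule step_data)
  have f: "0 < al" "al < pi/2" "sin al = S" "cos al = C" "0 < S" "0 < C" "0 < a" "a < 1" "0 < t" "t * C = a" "t * S = 1 - a"
    using F unfolding fag_facts_def by auto
  have g: "sin (pi/2 - al) = C" "sin (al - pi/2) = - C" using f(4) by (simp_all add: sin_diff)
  have vx: "valid (1 - a) \<and> side (1 - a) = 1" using valid_lin[of 0 "1 - a"] notint_between[of 0 "1 - a"] f by simp
  have vy: "valid (4 - a) \<and> side (4 - a) = 4" using valid_lin[of 3 "4 - a"] notint_between[of 3 "4 - a"] f by simp
  show "in_phase (1 - a, - al)" using vx f unfolding in_phase_def valid_def by auto
  show "in_phase (4 - a, (- (pi/2 - al)))" using vy f unfolding in_phase_def valid_def by auto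
  show "bpt (fst (1 - a, - al)) = (1 - a, 0)" using f by (simp add: bpt_def)
  show "dir (fst (1 - a, - al)) (snd (1 - a, - al)) = (- S, C)" using vx f by (simp add: dir_def nrm_def tng_def)
  show "bpt (4 - a) = (0, a)" using f by (simp add: bpt_def)
  show "0 < t" using f by simp
  show "(0, a) = (1 - a, 0) + t *\<^sub>R (- S, C)" using f by (simp add: algebra_simps)
  show "\<forall>\<tau>. 0 < \<tau> \<and> \<tau> < t \<longrightarrow> (1 - a, 0) + \<tau> *\<^sub>R (- S, C) \<in> open_square"
  proof (intro allI impI)
    fix \<tau> :: real assume h: "0 < \<tau> \<and> \<tau> < t"
    have m1: "\<tau> * S < t * S" using h f by (intro mult_strict_right_mono) auto
    have m2: "\<tau> * C < t * C" using h f by (intro mult_strict_right_mono) auto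
    have m: "0 < \<tau> * S" "\<tau> * S < 1 - a" "0 < \<tau> * C" "\<tau> * C < a"
      using h f m1 m2 by simp_all
    show "(1 - a, 0) + \<tau> *\<^sub>R (- S, C) \<in> open_square" using m f unfolding open_square_def by simp
  qed
  show "sin (- (pi/2 - al)) = (- S, C) \<bullet> tng (side (4 - a))" using vy g by (simp add: tng_def)
qed

lemma fag_m2:
  assumes F: "fag_facts al S C a t"
  shows "billiard_step (2 - a, - al) (1 - a, (- (pi/2 - al)))"
proof (rule step_data)
  have f: "0 < al" "al < pi/2" "sin al = S" "cos al = C" "0 < S" "0 < C" "0 < a" "a < 1" "0 < t" "t * C = a" "t * S = 1 - a"
    using F unfolding fag_facts_def by auto
  have g: "sin (pi/2 - al) = C" "sin (al - pi/2) = - C" using f(4) by (simp_all add: sin_diff)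
  have vx: "valid (2 - a) \<and> side (2 - a) = 2" using valid_lin[of 1 "2 - a"] notint_between[of 1 "2 - a"] f by simp
  have vy: "valid (1 - a) \<and> side (1 - a) = 1" using valid_lin[of 0 "1 - a"] notint_between[of 0 "1 - a"] f by simp
  show "in_phase (2 - a, - al)" using vx f unfolding in_phase_def valid_def by auto
  show "in_phase (1 - a, (- (pi/2 - al)))" using vy f unfolding in_phase_def valid_def by auto
  show "bpt (fst (2 - a, - al)) = (1, 1 - a)" using f by (simp add: bpt_def)
  show "dir (fst (2 - a, - al)) (snd (2 - a, - al)) = (- C, - S)" using vx f by (simp add: dir_def nrm_def tng_def)
  show "bpt (1 - a) = (1 - a, 0)" using f by (simp add: bpt_def)
  show "0 < t" using f by simp
  show "(1 - a, 0) = (1, 1 - a) + t *\<^sub>R (- C, - S)" using f by (simp add: algebra_simps)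
  show "\<forall>\<tau>. 0 < \<tau> \<and> \<tau> < t \<longrightarrow> (1, 1 - a) + \<tau> *\<^sub>R (- C, - S) \<in> open_square"
  proof (intro allI impI)
    fix \<tau> :: real assume h: "0 < \<tau> \<and> \<tau> < t"
    have m1: "\<tau> * S < t * S" using h f by (intro mult_strict_right_mono) auto
    have m2: "\<tau> * C < t * C" using h f by (intro mult_strict_right_mono) auto
    have m: "0 < \<tau> * S" "\<tau> * S < 1 - a" "0 < \<tau> * C" "\<tau> * C < a"
      using h f m1 m2 by simp_all
    show "(1, 1 - a) + \<tau> *\<^sub>R (- C, - S) \<in> open_square" using m f unfolding open_square_def by simp
  qed
  show "sin (- (pi/2 - al)) = (- C, - S) \<bullet> tng (side (1 - a))" using vy g by (simp add: tng_def)
qed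

lemma fag_m3:
  assumes F: "fag_facts al S C a t"
  shows "billiard_step (3 - a, - al) (2 - a, (- (pi/2 - al)))"
proof (rule step_data)
  have f: "0 < al" "al < pi/2" "sin al = S" "cos al = C" "0 < S" "0 < C" "0 < a" "a < 1" "0 < t" "t * C = a" "t * S = 1 - a"
    using F unfolding fag_facts_def by auto
  have g: "sin (pi/2 - al) = C" "sin (al - pi/2) = - C" using f(4) by (simp_all add: sin_diff)
  have vx: "valid (3 - a) \<and> side (3 - a) = 3" using valid_lin[of 2 "3 - a"] notint_between[of 2 "3 - a"] f by simp
  have vy: "valid (2 - a) \<and> side (2 - a) = 2" using valid_lin[of 1 "2 - a"] notint_between[of 1 "2 - a"] f by simp
  show "in_phase (3 - a, - al)" using vx f unfolding in_phase_def valid_def by auto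
  show "in_phase (2 - a, (- (pi/2 - al)))" using vy f unfolding in_phase_def valid_def by auto
  show "bpt (fst (3 - a, - al)) = (a, 1)" using f by (simp add: bpt_def)
  show "dir (fst (3 - a, - al)) (snd (3 - a, - al)) = (S, - C)" using vx f by (simp add: dir_def nrm_def tng_def)
  show "bpt (2 - a) = (1, 1 - a)" using f by (simp add: bpt_def)
  show "0 < t" using f by simp
  show "(1, 1 - a) = (a, 1) + t *\<^sub>R (S, - C)" using f by (simp add: algebra_simps)
  show "\<forall>\<tau>. 0 < \<tau> \<and> \<tau> < t \<longrightarrow> (a, 1) + \<tau> *\<^sub>R (S, - C) \<in> open_square"
  proof (intro allI impI)
    fix \<tau> :: real assume h: "0 < \<tau> \<and> \<tau> < t"
    have m1: "\<tau> * S < t * S" using h f by (intro mult_strict_right_mono) auto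
    have m2: "\<tau> * C < t * C" using h f by (intro mult_strict_right_mono) auto
    have m: "0 < \<tau> * S" "\<tau> * S < 1 - a" "0 < \<tau> * C" "\<tau> * C < a"
      using h f m1 m2 by simp_all
    show "(a, 1) + \<tau> *\<^sub>R (S, - C) \<in> open_square" using m f unfolding open_square_def by simp
  qed
  show "sin (- (pi/2 - al)) = (S, - C) \<bullet> tng (side (2 - a))" using vy g by (simp add: tng_def)
qed

lemma fag_m4:
  assumes F: "fag_facts al S C a t"
  shows "billiard_step (4 - a, - al) (3 - a, (- (pi/2 - al)))"
proof (rule step_data)
  have f: "0 < al" "al < pi/2" "sin al = S" "cos al = C" "0 < S" "0 < C" "0 < a" "a < 1" "0 < t" "t * C = a" "t * S = 1 - a"
    using F unfolding fag_facts_def by auto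
  have g: "sin (pi/2 - al) = C" "sin (al - pi/2) = - C" using f(4) by (simp_all add: sin_diff)
  have vx: "valid (4 - a) \<and> side (4 - a) = 4" using valid_lin[of 3 "4 - a"] notint_between[of 3 "4 - a"] f by simp
  have vy: "valid (3 - a) \<and> side (3 - a) = 3" using valid_lin[of 2 "3 - a"] notint_between[of 2 "3 - a"] f by simp
  show "in_phase (4 - a, - al)" using vx f unfolding in_phase_def valid_def by auto
  show "in_phase (3 - a, (- (pi/2 - al)))" using vy f unfolding in_phase_def valid_def by auto
  show "bpt (fst (4 - a, - al)) = (0, a)" using f by (simp add: bpt_def)
  show "dir (fst (4 - a, - al)) (snd (4 - a, - al)) = (C, S)" using vx f by (simp add: dir_def nrm_def tng_def)
  show "bpt (3 - a) = (a, 1)" using f by (simp add: bpt_def)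
  show "0 < t" using f by simp
  show "(a, 1) = (0, a) + t *\<^sub>R (C, S)" using f by (simp add: algebra_simps)
  show "\<forall>\<tau>. 0 < \<tau> \<and> \<tau> < t \<longrightarrow> (0, a) + \<tau> *\<^sub>R (C, S) \<in> open_square"
  proof (intro allI impI)
    fix \<tau> :: real assume h: "0 < \<tau> \<and> \<tau> < t"
    have m1: "\<tau> * S < t * S" using h f by (intro mult_strict_right_mono) auto
    have m2: "\<tau> * C < t * C" using h f by (intro mult_strict_right_mono) auto
    have m: "0 < \<tau> * S" "\<tau> * S < 1 - a" "0 < \<tau> * C" "\<tau> * C < a"
      using h f m1 m2 by simp_all
    show "(0, a) + \<tau> *\<^sub>R (C, S) \<in> open_square" using m f unfolding open_square_def by simp
  qed
  show "sin (- (pi/2 - al)) = (C, S) \<bullet> tng (side (3 - a))" using vy g by (simp add: tng_def)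
qed

definition alp :: "real \<Rightarrow> real" where "alp lam = (pi/2) * lam / (1 + lam)"
definition aa :: "real \<Rightarrow> real" where "aa lam = cos (alp lam) / (sin (alp lam) + cos (alp lam))"
definition tt :: "real \<Rightarrow> real" where "tt lam = 1 / (sin (alp lam) + cos (alp lam))"
definition pt :: "real \<Rightarrow> bool \<Rightarrow> nat \<Rightarrow> phase" where
  "pt lam b k = (if b then (real k - 1 + aa lam, alp lam) else (real k - aa lam, - alp lam))"

lemma alp_bounds: "lam > 0 \<Longrightarrow> 0 < alp lam \<and> alp lam < pi/2"
  unfolding alp_def by (auto simp: field_simps)

lemma facts_lam: assumes "lam > 0"
  shows "fag_facts (alp lam) (sin (alp lam)) (cos (alp lam)) (aa lam) (tt lam)"
proof -
  have b: "0 < alp lam" "alp lam < pi/2" using alp_bounds[OF assms] by auto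
  have S: "sin (alp lam) > 0" using b by (intro sin_gt_zero) auto
  have C: "cos (alp lam) > 0" using b by (intro cos_gt_zero_pi) auto
  show ?thesis unfolding fag_facts_def aa_def tt_def using b S C
    by (auto simp: field_simps)
qed

lemma lam_alp: "lam > 0 \<Longrightarrow> lam * (pi/2 - alp lam) = alp lam"
  unfolding alp_def by (simp add: field_simps)

lemma fag_step:
  assumes "lam > 0" "k \<in> {1,2,3,4}"
  shows "lambda_step lam (pt lam b k) (pt lam b (nxt b k))"
proof -
  define al where "al = alp lam"
  define a where "a = aa lam"
  have F: "fag_facts al (sin al) (cos al) a (tt lam)" using facts_lam[OF assms(1)] unfolding al_def a_def .
  have la1: "lam * (pi/2 - al) = al" using lam_alp[OF assms(1)] unfolding al_def by simp
  have la2: "lam * (- (pi/2 - al)) = - al" using la1 by (simp only: mult_minus_right)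
  note la = la1 la2
  have P: "pt lam b k = (if b then (real k - 1 + a, al) else (real k - a, - al))" for k
    unfolding pt_def al_def a_def by simp
  show ?thesis
  proof (cases b)
    case True
    show ?thesis using assms(2)
    proof (elim insertE emptyE)
      assume kk: "k = 1"
      have n: "nxt b k = 2" using kk True by (simp add: nxt_def)
      have e1: "pt lam b k = (a, al)" using kk True by (simp add: pt_def al_def a_def)
      have e2: "pt lam b (nxt b k) = (1 + a, al)" using n True by (simp add: pt_def al_def a_def)
      show ?thesis unfolding e1 e2 lambda_step_def fst_conv snd_conv
        by (rule exI[of _ "pi/2 - al"]) (rule conjI[OF fag_p1[OF F] la1[symmetric]])
    next
      assume kk: "k = 2"
      have n: "nxt b k = 3" using kk True by (simp add: nxt_def)
      have e1: "pt lam b k = (1 + a, al)" using kk True by (simp add: pt_def al_def a_def)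
      have e2: "pt lam b (nxt b k) = (2 + a, al)" using n True by (simp add: pt_def al_def a_def)
      show ?thesis unfolding e1 e2 lambda_step_def fst_conv snd_conv
        by (rule exI[of _ "pi/2 - al"]) (rule conjI[OF fag_p2[OF F] la1[symmetric]])
    next
      assume kk: "k = 3"
      have n: "nxt b k = 4" using kk True by (simp add: nxt_def)
      have e1: "pt lam b k = (2 + a, al)" using kk True by (simp add: pt_def al_def a_def)
      have e2: "pt lam b (nxt b k) = (3 + a, al)" using n True by (simp add: pt_def al_def a_def)
      show ?thesis unfolding e1 e2 lambda_step_def fst_conv snd_conv
        by (rule exI[of _ "pi/2 - al"]) (rule conjI[OF fag_p3[OF F] la1[symmetric]])
    next
      assume kk: "k = 4"
      have n: "nxt b k = 1" using kk True by (simp add: nxt_def)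
      have e1: "pt lam b k = (3 + a, al)" using kk True by (simp add: pt_def al_def a_def)
      have e2: "pt lam b (nxt b k) = (a, al)" using n True by (simp add: pt_def al_def a_def)
      show ?thesis unfolding e1 e2 lambda_step_def fst_conv snd_conv
        by (rule exI[of _ "pi/2 - al"]) (rule conjI[OF fag_p4[OF F] la1[symmetric]])
    qed
  next
    case False
    show ?thesis using assms(2)
    proof (elim insertE emptyE)
      assume kk: "k = 1"
      have n: "nxt b k = 4" using kk False by (simp add: nxt_def)
      have e1: "pt lam b k = (1 - a, - al)" using kk False by (simp add: pt_def al_def a_def)
      have e2: "pt lam b (nxt b k) = (4 - a, - al)" using n False by (simp add: pt_def al_def a_def)
      show ?thesis unfolding e1 e2 lambda_step_def fst_conv snd_conv
        by (rule exI[of _ "- (pi/2 - al)"]) (rule conjI[OF fag_m1[OF F] la2[symmetric]])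
    next
      assume kk: "k = 2"
      have n: "nxt b k = 1" using kk False by (simp add: nxt_def)
      have e1: "pt lam b k = (2 - a, - al)" using kk False by (simp add: pt_def al_def a_def)
      have e2: "pt lam b (nxt b k) = (1 - a, - al)" using n False by (simp add: pt_def al_def a_def)
      show ?thesis unfolding e1 e2 lambda_step_def fst_conv snd_conv
        by (rule exI[of _ "- (pi/2 - al)"]) (rule conjI[OF fag_m2[OF F] la2[symmetric]])
    next
      assume kk: "k = 3"
      have n: "nxt b k = 2" using kk False by (simp add: nxt_def)
      have e1: "pt lam b k = (3 - a, - al)" using kk False by (simp add: pt_def al_def a_def)
      have e2: "pt lam b (nxt b k) = (2 - a, - al)" using n False by (simp add: pt_def al_def a_def)
      show ?thesis unfolding e1 e2 lambda_step_def fst_conv snd_conv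
        by (rule exI[of _ "- (pi/2 - al)"]) (rule conjI[OF fag_m3[OF F] la2[symmetric]])
    next
      assume kk: "k = 4"
      have n: "nxt b k = 3" using kk False by (simp add: nxt_def)
      have e1: "pt lam b k = (4 - a, - al)" using kk False by (simp add: pt_def al_def a_def)
      have e2: "pt lam b (nxt b k) = (3 - a, - al)" using n False by (simp add: pt_def al_def a_def)
      show ?thesis unfolding e1 e2 lambda_step_def fst_conv snd_conv
        by (rule exI[of _ "- (pi/2 - al)"]) (rule conjI[OF fag_m4[OF F] la2[symmetric]])
    qed
  qed
qed

definition orb :: "real \<Rightarrow> bool \<Rightarrow> nat \<Rightarrow> phase list" where
  "orb lam b k0 = map (\<lambda>i. pt lam b ((nxt b ^^ i) k0)) [0..<4]"

lemma in14: "(1::nat) \<le> x \<Longrightarrow> x \<le> 4 \<Longrightarrow> x \<in> {1,2,3,4}"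
  by auto

lemma nxt_range: "nxt b k \<in> {1,2,3,4}"
proof -
  have "1 \<le> nxt b k \<and> nxt b k \<le> 4" unfolding nxt_def by (cases b) auto
  then show ?thesis using in14 by blast
qed

lemma nxt_pow_range: "k \<in> {1,2,3,4} \<Longrightarrow> (nxt b ^^ i) k \<in> {1,2,3,4}"
proof (cases i)
  case 0 assume "k \<in> {1,2,3,4}" then show ?thesis using 0 by simp
next
  case (Suc n) then show ?thesis using nxt_range[of b "(nxt b ^^ n) k"] by simp
qed

lemma nxt_vals1: "nxt True (Suc 0) = 2" "nxt False (Suc 0) = 4"
  by (simp_all add: nxt_def)

lemma nxt4: "k \<in> {1,2,3,4} \<Longrightarrow> (nxt b ^^ 4) k = k"
proof -
  assume "k \<in> {1,2,3,4}"
  moreover have "(nxt b ^^ 4) k = nxt b (nxt b (nxt b (nxt b k)))" by (simp add: numeral_eq_Suc)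
  ultimately show ?thesis by (cases b) (auto simp: nxt_vals nxt_vals1)
qed

lemma orb_len: "length (orb lam b k0) = 4" unfolding orb_def by simp

lemma orb_nth: "i < 4 \<Longrightarrow> orb lam b k0 ! i = pt lam b ((nxt b ^^ i) k0)"
  unfolding orb_def by simp

lemma orb_periodic:
  assumes "lam > 0" "k0 \<in> {1,2,3,4}"
  shows "periodic_orbit (lambda_step lam) (orb lam b k0)"
  unfolding periodic_orbit_def orb_len
proof (intro conjI allI impI)
  show "orb lam b k0 \<noteq> []" using orb_len[of lam b k0] by auto
  fix i :: nat assume i: "i < 4"
  have e: "(nxt b ^^ (Suc i mod 4)) k0 = nxt b ((nxt b ^^ i) k0)"
  proof (cases "i = 3")
    case True
    then have "nxt b ((nxt b ^^ i) k0) = (nxt b ^^ 4) k0" by (simp add: numeral_eq_Suc)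
    then show ?thesis using nxt4[OF assms(2)] True by simp
  next
    case False
    then have "Suc i mod 4 = Suc i" using i by simp
    then show ?thesis by simp
  qed
  have i2: "Suc i mod 4 < 4" by simp
  show "lambda_step lam (orb lam b k0 ! i) (orb lam b k0 ! (Suc i mod 4))"
    unfolding orb_nth[OF i] orb_nth[OF i2] e
    by (rule fag_step[OF assms(1) nxt_pow_range[OF assms(2)]])
qed

lemma aa_bounds: "lam > 0 \<Longrightarrow> 0 < aa lam \<and> aa lam < 1"
  using facts_lam unfolding fag_facts_def by blast

lemma side_pt:
  assumes "lam > 0" "k \<in> {1,2,3,4}"
  shows "side (fst (pt lam b k)) = k"
proof -
  have a: "0 < aa lam" "aa lam < 1" using aa_bounds[OF assms(1)] by auto
  have k: "1 \<le> k" "k \<le> 4" using assms(2) by auto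
  define x where "x = fst (pt lam b k)"
  have "real (k - 1) < x" "x < real (k - 1) + 1" unfolding x_def pt_def using a k by (auto simp: of_nat_diff)
  then have "valid x \<and> side x = k - 1 + 1" using valid_lin[of "k - 1" x] notint_between[of "k - 1" x] k by simp
  then show ?thesis using k unfolding x_def by simp
qed

lemma itin_orb: "lam > 0 \<Longrightarrow> k0 \<in> {1,2,3,4} \<Longrightarrow> itinerary (orb lam b k0) = map (\<lambda>i. (nxt b ^^ i) k0) [0..<4]"
proof -
  assume a: "lam > 0" "k0 \<in> {1,2,3,4}"
  have "map (\<lambda>x. side (fst x)) (map (\<lambda>i. pt lam b ((nxt b ^^ i) k0)) [0..<4]) = map (\<lambda>i. (nxt b ^^ i) k0) [0..<4]"
    unfolding map_map o_def
    by (rule map_cong[OF refl]) (rule side_pt[OF a(1) nxt_pow_range[OF a(2)]])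
  then show ?thesis unfolding itinerary_def orb_def .
qed

lemma lambda_step_one: "lambda_step 1 x y \<longleftrightarrow> billiard_step x y"
  unfolding lambda_step_def by auto

lemma alp1: "alp 1 = pi/4" unfolding alp_def by simp

lemma snd_orb1: "map snd (orb 1 b k0) = map (\<lambda>i. ang b) [0..<4]"
  unfolding orb_def pt_def ang_def alp1 by simp

lemma pt_tendsto:
  assumes "lam \<longlonglongrightarrow> 1"
  shows "(\<lambda>n. pt (lam n) b k) \<longlonglongrightarrow> pt 1 b k"
proof -
  have A: "(\<lambda>n. alp (lam n)) \<longlonglongrightarrow> alp 1" unfolding alp_def
    by (intro tendsto_intros assms) simp
  have F1: "fag_facts (alp 1) (sin (alp 1)) (cos (alp 1)) (aa 1) (tt 1)" using facts_lam by simp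
  then have nz: "sin (alp 1) + cos (alp 1) \<noteq> 0" unfolding fag_facts_def by simp
  have B: "(\<lambda>n. aa (lam n)) \<longlonglongrightarrow> aa 1" unfolding aa_def
    by (intro tendsto_intros A nz)
  show ?thesis unfolding pt_def
    by (cases b) (simp_all, (intro tendsto_intros A B)+)
qed

lemma orb_stable:
  assumes "k0 \<in> {1,2,3,4}"
  shows "lambda_plus_stable (orb 1 b k0) \<and> lambda_minus_stable (orb 1 b k0)"
proof -
  have conv: "\<forall>i < length (orb 1 b k0). (\<lambda>n. orb (lam n) b k0 ! i) \<longlonglongrightarrow> orb 1 b k0 ! i"
    if "lam \<longlonglongrightarrow> 1" for lam
  proof (intro allI impI)
    fix i assume "i < length (orb 1 b k0)"
    then have i: "i < 4" using orb_len by metis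
    show "(\<lambda>n. orb (lam n) b k0 ! i) \<longlonglongrightarrow> orb 1 b k0 ! i"
      unfolding orb_nth[OF i] by (rule pt_tendsto[OF that])
  qed
  have it: "lam > 0 \<Longrightarrow> itinerary (orb lam b k0) = itinerary (orb 1 b k0)" for lam
  proof -
    assume "lam > 0"
    then have "itinerary (orb lam b k0) = map (\<lambda>i. (nxt b ^^ i) k0) [0..<4]" by (rule itin_orb[OF _ assms])
    also have "\<dots> = itinerary (orb 1 b k0)" by (rule itin_orb[OF _ assms, symmetric]) simp
    finally show ?thesis .
  qed
  define lp where "lp n = 1 + inverse (real (Suc n))" for n
  define lm where "lm n = 1 + - inverse (real (Suc (Suc n)))" for n
  have lp1: "\<forall>n. lp (Suc n) < lp n" unfolding lp_def by (auto simp: field_simps)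
  have lp2: "lp \<longlonglongrightarrow> 1" unfolding lp_def using LIMSEQ_inverse_real_of_nat_add[of 1] .
  have lp3: "\<forall>n. 0 < lp n" unfolding lp_def by (auto simp: add_pos_pos)
  have lm2: "lm \<longlonglongrightarrow> 1" unfolding lm_def
    using LIMSEQ_Suc[OF LIMSEQ_inverse_real_of_nat_add_minus[of 1]] .
  have lm1: "\<forall>n. lm n < lm (Suc n)" unfolding lm_def by (auto simp: field_simps)
  have lm3: "\<forall>n. 0 < lm n" unfolding lm_def by (auto simp: field_simps)
  have per: "\<And>l. l > 0 \<Longrightarrow> periodic_orbit (lambda_step l) (orb l b k0) \<and> itinerary (orb l b k0) = itinerary (orb 1 b k0)"
    using orb_periodic[OF _ assms] it by blast
  have A0: "(\<forall>n. lp (Suc n) < lp n) \<and> lp \<longlonglongrightarrow> 1 \<and> (\<forall>n. 0 < lp n) \<and>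
     (\<forall>n. periodic_orbit (lambda_step (lp n)) (orb (lp n) b k0) \<and> itinerary (orb (lp n) b k0) = itinerary (orb 1 b k0)) \<and>
     (\<forall>i < length (orb 1 b k0). (\<lambda>n. orb (lp n) b k0 ! i) \<longlonglongrightarrow> orb 1 b k0 ! i)"
    using lp1 lp2 lp3 per conv[OF lp2] by blast
  have A: "lambda_plus_stable (orb 1 b k0)" unfolding lambda_plus_stable_def
    apply (rule exI[of _ lp])
    apply (rule exI[of _ "\<lambda>n. orb (lp n) b k0"])
    using A0 by blast
  have B0: "(\<forall>n. lm n < lm (Suc n)) \<and> lm \<longlonglongrightarrow> 1 \<and> (\<forall>n. 0 < lm n) \<and>
     (\<forall>n. periodic_orbit (lambda_step (lm n)) (orb (lm n) b k0) \<and> itinerary (orb (lm n) b k0) = itinerary (orb 1 b k0)) \<and>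
     (\<forall>i < length (orb 1 b k0). (\<lambda>n. orb (lm n) b k0 ! i) \<longlonglongrightarrow> orb 1 b k0 ! i)"
    using lm1 lm2 lm3 per conv[OF lm2] by blast
  have B: "lambda_minus_stable (orb 1 b k0)" unfolding lambda_minus_stable_def
    apply (rule exI[of _ lm])
    apply (rule exI[of _ "\<lambda>n. orb (lm n) b k0"])
    using B0 by blast
  show ?thesis using A B by blast
qed

lemma cyl_mem: "q' \<in> cylinder_of q \<longleftrightarrow> periodic_orbit billiard_step q' \<and> itinerary q' = itinerary q \<and> map snd q' = map snd q"
  unfolding cylinder_of_def by simp

lemma itin_len: "itinerary q' = itinerary q \<Longrightarrow> length q' = length q"
  unfolding itinerary_def by (metis length_map)

lemma itin_side: "itinerary q' = itinerary q \<Longrightarrow> i < length q \<Longrightarrow> side (fst (q'!i)) = side (fst (q!i))"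
proof -
  assume a: "itinerary q' = itinerary q" "i < length q"
  have i': "i < length q'" using a itin_len[OF a(1)] by simp
  have "side (fst (q'!i)) = map (\<lambda>x. side (fst x)) q' ! i" using i' by simp
  also have "\<dots> = map (\<lambda>x. side (fst x)) q ! i" using a(1) unfolding itinerary_def by simp
  also have "\<dots> = side (fst (q!i))" using a(2) by simp
  finally show ?thesis .
qed

lemma snd_eq: "map snd q' = map snd (q::phase list) \<Longrightarrow> i < length q \<Longrightarrow> snd (q'!i) = snd (q!i)"
proof -
  assume a: "map snd q' = map snd q" "i < length q"
  have l: "length q' = length q" using arg_cong[OF a(1), of length] by simp
  have i': "i < length q'" using a l by simp
  have "snd (q'!i) = map snd q' ! i" using i' by simp
  also have "\<dots> = map snd q ! i" using a(1) by simp
  also have "\<dots> = snd (q!i)" using a(2) by simp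
  finally show ?thesis .
qed

lemma len_count:
  assumes "periodic_orbit billiard_step q"
  shows "real (length q) = real (N q 1) + real (N q 2) + real (N q 3) + real (N q 4)"
proof -
  let ?L = "length q"
  have "real ?L = (\<Sum>i<?L. (1::real))" by simp
  also have "\<dots> = (\<Sum>i<?L. (if side (fst (q!i)) = 1 then 1 else 0) + (if side (fst (q!i)) = 2 then 1 else 0)
        + (if side (fst (q!i)) = 3 then 1 else 0) + (if side (fst (q!i)) = 4 then (1::real) else 0))"
  proof (intro sum.cong refl)
    fix i assume "i \<in> {..<?L}"
    then have "valid (fst (q!i))" using orbit_in_phase[OF assms] in_phase_valid by simp
    then have "side (fst (q!i)) \<in> {1,2,3,4}" by (rule side_range)
    then show "1 = (if side (fst (q!i)) = 1 then 1 else 0) + (if side (fst (q!i)) = 2 then 1 else 0)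
        + (if side (fst (q!i)) = 3 then 1 else 0) + (if side (fst (q!i)) = 4 then (1::real) else 0)"
      by auto
  qed
  also have "\<dots> = real (N q 1) + real (N q 2) + real (N q 3) + real (N q 4)"
    unfolding sum.distrib sum_ind N_def by simp
  finally show ?thesis .
qed

lemma psi_eq: "side (fst x) = side (fst y) \<Longrightarrow> snd x = snd y \<Longrightarrow> psi x = psi y"
  unfolding psi_def by simp

lemma decr_gt: assumes "\<forall>n. lam (Suc n) < lam n" "lam \<longlonglongrightarrow> (1::real)" shows "lam n > 1"
proof -
  have d: "decseq lam" using assms(1) by (intro decseq_SucI) (simp add: less_imp_le)
  have "1 \<le> lam (Suc n)" using decseq_ge[OF d assms(2)] .
  moreover have "lam (Suc n) < lam n" using assms(1) by blast
  ultimately show ?thesis by linarith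
qed

lemma stable_psi:
  assumes q: "periodic_orbit billiard_step q" and st: "lambda_plus_stable q"
  shows "psi (q!0) = 0 \<or> psi (q!0) = pi/2 \<or> psi (q!0) = pi/4"
proof -
  obtain lam qs where l: "\<forall>n. lam (Suc n) < lam n" "lam \<longlonglongrightarrow> 1" "\<forall>n. 0 < lam n"
    and qs: "\<forall>n. periodic_orbit (lambda_step (lam n)) (qs n) \<and> itinerary (qs n) = itinerary q"
    and cv: "\<forall>i < length q. (\<lambda>n. qs n ! i) \<longlonglongrightarrow> q ! i"
    using st unfolding lambda_plus_stable_def by blast
  have L: "0 < length q" using q unfolding periodic_orbit_def by auto
  have ne: "lam n \<noteq> 1" for n using decr_gt[OF l(1,2), of n] by simp
  have rel: "psi (q!0) * length q = (pi/2) * (\<Sum>j<length q. Hh (side (fst (q!j))))"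
    by (rule stable_relation[OF q, of lam qs]) (use l ne qs cv L in auto)
  define n1 where "n1 = real (N q 1)"
  define n2 where "n2 = real (N q 2)"
  define n3 where "n3 = real (N q 3)"
  define n4 where "n4 = real (N q 4)"
  define ps where "ps = psi (q!0)"
  define T where "T = (\<Sum>i<length q. len (q!i) (q!(Suc i mod length q)))"
  have oc: "T * cos ps = 2 * n4" "T * cos ps = 2 * n2" "T * sin ps = 2 * n1" "T * sin ps = 2 * n3"
    using orbit_counts[OF q] unfolding T_def ps_def n1_def n2_def n3_def n4_def by auto
  have lc: "real (length q) = n1 + n2 + n3 + n4" using len_count[OF q] unfolding n1_def n2_def n3_def n4_def .
  have r2: "ps * (n1 + n2 + n3 + n4) = (pi/2) * (n1 + n3)"
    using rel lc Hh_sum[where L="length q" and q=q] unfolding ps_def n1_def n3_def N_def by simp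
  have e24: "n2 = n4" "n3 = n1" using oc by auto
  have r3: "ps * (real (N q 1) + real (N q 4)) = (pi/2) * real (N q 1)"
    using r2 e24 unfolding n1_def n4_def by (simp add: algebra_simps)
  have r4: "real (N q 1) * cos ps = real (N q 4) * sin ps"
  proof -
    have "2 * n1 * cos ps = T * sin ps * cos ps" using oc(3) by simp
    also have "\<dots> = T * cos ps * sin ps" by (simp add: algebra_simps)
    also have "\<dots> = 2 * n4 * sin ps" using oc(1) by simp
    finally show ?thesis unfolding n1_def n4_def by simp
  qed
  have pos: "N q 1 + N q 4 > 0"
  proof (rule ccontr)
    assume "\<not> ?thesis"
    then have "n1 = 0" "n4 = 0" unfolding n1_def n4_def by auto
    then have "real (length q) = 0" using lc e24 by simp
    then show False using L by simp
  qed
  have r3': "ps * real (N q 1 + N q 4) = (pi/2) * real (N q 1)" using r3 by simp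
  have nt: "N q 1 = 0 \<or> N q 4 = 0 \<or> N q 1 = N q 4"
    by (rule nt_lemma[OF pos]) (use r3' r4 in simp_all)
  then show ?thesis
  proof (elim disjE)
    assume a: "N q 1 = 0"
    then have "N q 4 > 0" using pos by simp
    then have "ps = 0" using r3 a by simp
    then show ?thesis unfolding ps_def by simp
  next
    assume a: "N q 4 = 0"
    then have "N q 1 > 0" using pos by simp
    then have "ps = pi/2" using r3 a by simp
    then show ?thesis unfolding ps_def by simp
  next
    assume a: "N q 1 = N q 4"
    then have "N q 1 > 0" using pos by simp
    then have "ps * 2 = pi/2" using r3 a by (simp add: algebra_simps)
    then have "ps = pi/4" by simp
    then show ?thesis unfolding ps_def by simp
  qed
qed

lemma pp_stable:
  assumes q: "periodic_orbit billiard_step q" and z: "\<forall>i<length q. snd (q!i) = 0"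
  shows "lambda_plus_stable q \<and> lambda_minus_stable q"
proof -
  have per: "periodic_orbit (lambda_step l) q" for l
    unfolding periodic_orbit_def
  proof (intro conjI allI impI)
    show "q \<noteq> []" using q unfolding periodic_orbit_def by auto
    fix i assume i: "i < length q"
    have st: "billiard_step (q!i) (q!(Suc i mod length q))" using orbit_step[OF q i] .
    have "0 < length q" using i by linarith
    then have j: "Suc i mod length q < length q" by (rule mod_less_divisor)
    have z0: "snd (q!(Suc i mod length q)) = 0" using z j by blast
    have "billiard_step (q!i) (fst (q!(Suc i mod length q)), 0)" using st z0 by (metis prod.collapse)
    then show "lambda_step l (q!i) (q!(Suc i mod length q))" unfolding lambda_step_def using z0 by auto
  qed
  define lp where "lp n = 1 + inverse (real (Suc n))" for n
  define lm where "lm n = 1 + - inverse (real (Suc (Suc n)))" for n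
  have lp1: "\<forall>n. lp (Suc n) < lp n" unfolding lp_def by (auto simp: field_simps)
  have lp2: "lp \<longlonglongrightarrow> 1" unfolding lp_def using LIMSEQ_inverse_real_of_nat_add[of 1] .
  have lp3: "\<forall>n. 0 < lp n" unfolding lp_def by (auto simp: add_pos_pos)
  have lm2: "lm \<longlonglongrightarrow> 1" unfolding lm_def
    using LIMSEQ_Suc[OF LIMSEQ_inverse_real_of_nat_add_minus[of 1]] .
  have lm1: "\<forall>n. lm n < lm (Suc n)" unfolding lm_def by (auto simp: field_simps)
  have lm3: "\<forall>n. 0 < lm n" unfolding lm_def by (auto simp: field_simps)
  have A: "lambda_plus_stable q" unfolding lambda_plus_stable_def
    apply (rule exI[of _ lp])
    apply (rule exI[of _ "\<lambda>n. q"])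
    using lp1 lp2 lp3 per by blast
  have B: "lambda_minus_stable q" unfolding lambda_minus_stable_def
    apply (rule exI[of _ lm])
    apply (rule exI[of _ "\<lambda>n. q"])
    using lm1 lm2 lm3 per by blast
  show ?thesis using A B by blast
qed

lemma nrm_opp: "k \<in> {1,2,3,4} \<Longrightarrow> nrm ((k + 1) mod 4 + 1) = - nrm k"
  by (auto simp: nrm_def)

lemma fag_itin:
  assumes q: "periodic_orbit billiard_step q" "length q = 4"
    and st: "\<forall>i<length q. snd (q!i) = ang b \<and> q!(Suc i mod length q) = (fs b (fst (q!i)), ang b)"
  shows "itinerary q = map (\<lambda>i. (nxt b ^^ i) (side (fst (q!0)))) [0..<4]"
    "map snd q = map (\<lambda>i. ang b) [0..<4]"
proof -
  have v: "\<And>i. i < length q \<Longrightarrow> valid (fst (q!i))" using orbit_in_phase[OF q(1)] in_phase_valid by blast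
  have sd: "i < 4 \<Longrightarrow> side (fst (q!i)) = (nxt b ^^ i) (side (fst (q!0)))" for i
  proof (induction i)
    case 0 then show ?case by simp
  next
    case (Suc i)
    then have i: "i < length q" "Suc i mod length q = Suc i" using q(2) by simp_all
    have "fst (q!Suc i) = fs b (fst (q!i))" using st i by (metis fst_conv)
    then have "side (fst (q!Suc i)) = nxt b (side (fst (q!i)))" using fs_props[OF v[OF i(1)]] by simp
    then show ?case using Suc i q(2) by simp
  qed
  show "itinerary q = map (\<lambda>i. (nxt b ^^ i) (side (fst (q!0)))) [0..<4]"
  proof (rule nth_equalityI)
    show "length (itinerary q) = length (map (\<lambda>i. (nxt b ^^ i) (side (fst (q!0)))) [0..<4])"
      using q(2) by (simp add: itinerary_def)
    fix i assume "i < length (itinerary q)"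
    then have i: "i < 4" using q(2) by (simp add: itinerary_def)
    have "itinerary q ! i = side (fst (q!i))" using i q(2) by (simp add: itinerary_def)
    also have "\<dots> = (nxt b ^^ i) (side (fst (q!0)))" by (rule sd[OF i])
    also have "\<dots> = map (\<lambda>i. (nxt b ^^ i) (side (fst (q!0)))) [0..<4] ! i" using i by simp
    finally show "itinerary q ! i = map (\<lambda>i. (nxt b ^^ i) (side (fst (q!0)))) [0..<4] ! i" .
  qed
  show "map snd q = map (\<lambda>i. ang b) [0..<4]"
  proof (rule nth_equalityI)
    show "length (map snd q) = length (map (\<lambda>i. ang b) [0..<4])" using q(2) by simp
    fix i assume "i < length (map snd q)"
    then have i: "i < 4" using q(2) by simp
    have "snd (q!i) = ang b" using st i q(2) by simp
    then show "map snd q ! i = map (\<lambda>i. ang b) [0..<4] ! i" using i q(2) by simp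
  qed
qed

theorem corollary4p7:
  assumes "periodic_cylinder C"
  shows "lambda_stable_cylinder C \<longleftrightarrow> ping_pong_cylinder C \<or> fagnano4_cylinder C"
proof -
  obtain q where q: "periodic_orbit billiard_step q" "primitive q" "C = cylinder_of q"
    using assms unfolding periodic_cylinder_def by blast
  have qC: "q \<in> C" unfolding q(3) cyl_mem using q(1) by simp
  have L: "0 < length q" using q(1) unfolding periodic_orbit_def by auto
  have vq: "\<And>i. i < length q \<Longrightarrow> valid (fst (q!i))" using orbit_in_phase[OF q(1)] in_phase_valid by blast
  have thq: "\<And>i. i < length q \<Longrightarrow> \<bar>snd (q!i)\<bar> < pi/2" using orbit_in_phase[OF q(1)] in_phase_th by blast
  have mem: "\<And>q'. q' \<in> C \<Longrightarrow> periodic_orbit billiard_step q' \<and> itinerary q' = itinerary q \<and> map snd q' = map snd q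
      \<and> length q' = length q \<and> (\<forall>i<length q. side (fst (q'!i)) = side (fst (q!i)) \<and> snd (q'!i) = snd (q!i))"
    using itin_len itin_side snd_eq unfolding q(3) cyl_mem by blast
  show ?thesis
  proof
    assume "lambda_stable_cylinder C"
    then obtain q' where q'C: "q' \<in> C" and stq': "lambda_plus_stable q'"
      unfolding lambda_stable_cylinder_def by blast
    note m = mem[OF q'C]
    have ps: "psi (q'!0) = 0 \<or> psi (q'!0) = pi/2 \<or> psi (q'!0) = pi/4"
      using stable_psi[OF _ stq'] m by blast
    have pq: "\<And>i. i < length q \<Longrightarrow> psi (q!i) = psi (q'!0)"
    proof -
      fix i assume i: "i < length q"
      have "psi (q!i) = psi (q'!i)" using m i by (intro psi_eq) auto
      also have "\<dots> = psi (q'!0)" using psi_const[of q' i] m i by simp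
      finally show "psi (q!i) = psi (q'!0)" .
    qed
    show "ping_pong_cylinder C \<or> fagnano4_cylinder C"
    proof (cases "psi (q'!0) = pi/4")
      case False
      then have ps2: "psi (q'!0) = 0 \<or> psi (q'!0) = pi/2" using ps by blast
      have z: "\<forall>i<length q. snd (q!i) = 0"
      proof (intro allI impI)
        fix i assume i: "i < length q"
        have "psi (q!i) = 0 \<or> psi (q!i) = pi/2" using pq[OF i] ps2 by simp
        then show "snd (q!i) = 0" using thq[OF i] unfolding psi_def by (auto split: if_splits)
      qed
      have s: "length q = 2 \<and> side (fst (q!1)) = (side (fst (q!0)) + 1) mod 4 + 1"
        using ping_pong_struct[OF q(1,2) z] .
      have k: "side (fst (q!0)) \<in> {1,2,3,4}" using side_range[OF vq[OF L]] .
      have "ping_pong_cylinder C" unfolding ping_pong_cylinder_def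
      proof (intro conjI ballI)
        show "C \<noteq> {}" using qC by blast
        fix q'' assume q'': "q'' \<in> C"
        note m2 = mem[OF q'']
        show "length q'' = 2" using m2 s by simp
        show "snd (q''!0) = 0" using m2 s z by simp
        show "snd (q''!1) = 0" using m2 s z by simp
        show "nrm (side (fst (q''!1))) = - nrm (side (fst (q''!0)))"
          using m2 s nrm_opp[OF k] by simp
      qed
      then show ?thesis by blast
    next
      case True
      have a: "\<forall>i<length q. \<bar>snd (q!i)\<bar> = pi/4"
      proof (intro allI impI)
        fix i assume i: "i < length q"
        have "psi (q!i) = pi/4" using pq[OF i] True by simp
        then show "\<bar>snd (q!i)\<bar> = pi/4" unfolding psi_def by (auto split: if_splits)
      qed
      obtain b where b: "\<forall>i<length q. snd (q!i) = ang b \<and> q!(Suc i mod length q) = (fs b (fst (q!i)), ang b)"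
        using fagnano_struct[OF q(1) a] by blast
      have f: "length q = 4 \<and> fagnano_orbit q" using fagnano_prim[OF q(1,2) b] by blast
      have "fagnano4_cylinder C" unfolding fagnano4_cylinder_def
      proof (intro conjI ballI allI impI)
        show "C \<noteq> {}" using qC by blast
        fix q'' assume q'': "q'' \<in> C"
        note m2 = mem[OF q'']
        have e1: "itinerary q'' = itinerary q" and e2: "length q'' = length q" using m2 by blast+
        show "fagnano_orbit q''" using conjunct2[OF f] unfolding fagnano_orbit_def e1 e2 .
        show "length q'' = 4" using m2 f by simp
        fix i :: nat assume "i < 4"
        then show "\<bar>snd (q''!i)\<bar> = pi/4" using m2 f a by simp
      qed
      then show ?thesis by blast
    qed
  next
    assume "ping_pong_cylinder C \<or> fagnano4_cylinder C"
    then show "lambda_stable_cylinder C"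
    proof
      assume pp: "ping_pong_cylinder C"
      then obtain q0 where q0: "q0 \<in> C" unfolding ping_pong_cylinder_def by blast
      have l2: "length q0 = 2" "snd (q0!0) = 0" "snd (q0!1) = 0" using pp q0 unfolding ping_pong_cylinder_def by auto
      have z: "\<forall>i<length q0. snd (q0!i) = 0"
      proof (intro allI impI)
        fix i assume "i < length q0"
        then have "i = 0 \<or> i = 1" using l2 by auto
        then show "snd (q0!i) = 0" using l2 by auto
      qed
      have "lambda_plus_stable q0 \<and> lambda_minus_stable q0"
        using pp_stable[OF _ z] mem[OF q0] by blast
      then show ?thesis unfolding lambda_stable_cylinder_def using q0 by blast
    next
      assume fc: "fagnano4_cylinder C"
      then obtain q0 where q0: "q0 \<in> C" unfolding fagnano4_cylinder_def by blast
      have f0: "length q0 = 4" "\<forall>i<4. \<bar>snd (q0!i)\<bar> = pi/4" using fc q0 unfolding fagnano4_cylinder_def by auto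
      note m0 = mem[OF q0]
      have p0: "periodic_orbit billiard_step q0" using m0 by blast
      obtain b where b: "\<forall>i<length q0. snd (q0!i) = ang b \<and> q0!(Suc i mod length q0) = (fs b (fst (q0!i)), ang b)"
        using fagnano_struct[OF p0] f0 by auto
      define k0 where "k0 = side (fst (q0!0))"
      have k0: "k0 \<in> {1,2,3,4}" unfolding k0_def
        using side_range orbit_in_phase[OF p0] in_phase_valid f0(1) by simp
      have fi: "itinerary q0 = map (\<lambda>i. (nxt b ^^ i) k0) [0..<4]" "map snd q0 = map (\<lambda>i. ang b) [0..<4]"
        using fag_itin[OF p0 f0(1) b] unfolding k0_def by auto
      define qs where "qs = orb 1 b k0"
      have per: "periodic_orbit billiard_step qs"
        using orb_periodic[of 1 k0 b] k0 unfolding qs_def lambda_step_one[abs_def] by simp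
      have "itinerary qs = itinerary q0" using itin_orb[of 1 k0 b] k0 fi unfolding qs_def by simp
      moreover have "map snd qs = map snd q0" using snd_orb1 fi unfolding qs_def by simp
      ultimately have "qs \<in> C" using per m0 unfolding q(3) cyl_mem by simp
      moreover have "lambda_plus_stable qs \<and> lambda_minus_stable qs" using orb_stable[OF k0] unfolding qs_def .
      ultimately show ?thesis unfolding lambda_stable_cylinder_def by blast
    qed
  qed
qed

end
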